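(* In the crystal $\mathfrak G_n^B$: (1) The vertices of the connected component $B(\mathfrak C_n\otimes0)$ are exactly the words $\mathfrak Cx$ with $\mathfrak C$ a spin column, $x\in\mathcal B_n$ and $x\vartriangle\mathfrak C$. (2) The vertices of the connected component $B(\mathfrak C_n\otimes1)$ are exactly the words $\mathfrak Cx$ with $\mathfrak C$ a spin column, $x\in\mathcal B_n$ and $x\not\vartriangle\mathfrak C$. (3) Let $\Psi:B(\mathfrak C_n\otimes0)\to B(\mathfrak C_n)$ and $\Psi':B(\mathfrak C_n\otimes1)\to B(1\otimes\mathfrak C_n)$ be the crystal isomorphisms. If $x\vartriangle\mathfrak C$ then $\Psi(\mathfrak Cx)=\mathfrak C'$, the spin column with $\mathrm{wt}(\mathfrak C')=\mathrm{wt}(\mathfrak C)+\mathrm{wt}(x)$. If $x\not\vartriangle\mathfrak C$ then $\Psi'(\mathfrak Cx)=x'\mathfrak C'$, where $x'=\min\{t\in\mathfrak C:t\succeq x\}$ if $x\succeq0$, $x'=\min(\{t\in\mathfrak C:t\succeq x\}\cup\{0\})$ if $x\preceq n$, and $\mathfrak C'$ is the spin column with $\mathrm{wt}(\mathfrak C')=\mathrm{wt}(\mathfrak C)+\mathrm{wt}(x)-\mathrm{wt}(x')$.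
   Context: Fix $n\ge2$; $\mathcal B_n=\{1\prec\cdots\prec n\prec0\prec\bar n\prec\cdots\prec\bar1\}$. Vector crystal: arrows $i\xrightarrow{i}i+1$, $\overline{i+1}\xrightarrow{i}\bar i$ ($i<n$), $n\xrightarrow{n}0\xrightarrow{n}\bar n$. Spin columns: sets of $n$ letters of $\mathcal B_n\setminus\{0\}$ containing exactly one of $i,\bar i$ for each $i=1..n$; they form the crystal $B(\Lambda_n^B)$ with $\tilde f_n$: replace $n$ by $\bar n$ (else $0$), $\tilde e_n$: replace $\bar n$ by $n$; for $i<n$, $\tilde f_i$: replace $i,\overline{i+1}$ by $i+1,\bar i$ (else $0$), $\tilde e_i$: the reverse. $\mathfrak G_n^B$ is the crystal of $\bigoplus_l(V\oplus V(\Lambda_n^B))^{\otimes l}$ whose vertices are words over $\mathcal B_n\cup\{\text{spin columns}\}$, a word being identified with the tensor product of its letters, with tensor rule $\tilde f_i(u\otimes v)=\tilde f_iu\otimes v$ if $\varphi_i(u)>\varepsilon_i(v)$, else $u\otimes\tilde f_iv$; $\tilde e_i(u\otimes v)=u\otimes\tilde e_iv$ if $\varphi_i(u)<\varepsilon_i(v)$, else $\tilde e_iu\otimes v$. $\mathfrak C_n$ is the spin column $\{1,\dots,n\}$; $B(v)$ denotes the connected component of the word $v$. Weights in coordinates $e_1,\dots,e_n$: $\mathrm{wt}(i)=e_i$, $\mathrm{wt}(\bar i)=-e_i$, $\mathrm{wt}(0)=0$, $\mathrm{wt}(\mathfrak C)=\frac12(\sum_{i\in\mathfrak C}e_i-\sum_{\bar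 i\in\mathfrak C}e_i)$. For a letter $x$ and a spin column $\mathfrak C$ with greatest letter $z$, $x\vartriangle\mathfrak C$ means $x\not\preceq z$. *)

theory Defs
  imports Complex_Main
begin

datatype letter = Pos nat | Zero | Neg nat
  (* Pos i = i,  Zero = 0,  Neg i = bar i *)

fun valid_letter :: "nat \<Rightarrow> letter \<Rightarrow> bool" where
  "valid_letter n (Pos i) = (1 \<le> i \<and> i \<le> n)"
| "valid_letter n Zero = True"
| "valid_letter n (Neg i) = (1 \<le> i \<and> i \<le> n)"

text \<open>Position in the total order of B_n; x precedes y iff rank x < rank y.\<close>
fun rank :: "nat \<Rightarrow> letter \<Rightarrow> nat" where
  "rank n (Pos i) = i"
| "rank n Zero = n + 1"
| "rank n (Neg i) = 2 * n + 2 - i"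

definition fL :: "nat \<Rightarrow> nat \<Rightarrow> letter \<Rightarrow> letter option" where
  "fL n i x =
    (if i = n then (case x of Pos j \<Rightarrow> if j = n then Some Zero else None
                            | Zero \<Rightarrow> Some (Neg n)
                            | Neg j \<Rightarrow> None)
     else if 1 \<le> i \<and> i < n then
       (case x of Pos j \<Rightarrow> if j = i then Some (Pos (i + 1)) else None
                | Zero \<Rightarrow> None
                | Neg j \<Rightarrow> if j = i + 1 then Some (Neg i) else None)
     else None)"

definition eL :: "nat \<Rightarrow> nat \<Rightarrow> letter \<Rightarrow> letter option" where
  "eL n i x =
    (if i = n then (case x of Pos j \<Rightarrow> None
                            | Zero \<Rightarrow> Some (Pos n)
                            | Neg j \<Rightarrow> if j = n then Some Zero else None)
     else if 1 \<le> i \<and> i < n then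
       (case x of Pos j \<Rightarrow> if j = i + 1 then Some (Pos i) else None
                | Zero \<Rightarrow> None
                | Neg j \<Rightarrow> if j = i then Some (Neg (i + 1)) else None)
     else None)"

definition is_spin :: "nat \<Rightarrow> letter set \<Rightarrow> bool" where
  "is_spin n C \<longleftrightarrow>
     (\<forall>x\<in>C. x \<noteq> Zero \<and> valid_letter n x) \<and>
     (\<forall>i\<in>{1..n}. (Pos i \<in> C) \<noteq> (Neg i \<in> C))"

definition fS :: "nat \<Rightarrow> nat \<Rightarrow> letter set \<Rightarrow> letter set option" where
  "fS n i C =
    (if i = n then (if Pos n \<in> C then Some (C - {Pos n} \<union> {Neg n}) else None)
     else if 1 \<le> i \<and> i < n then
       (if Pos i \<in> C \<and> Neg (i + 1) \<in> C
        then Some (C - {Pos i, Neg (i + 1)} \<union> {Pos (i + 1), Neg i}) else None)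
     else None)"

definition eS :: "nat \<Rightarrow> nat \<Rightarrow> letter set \<Rightarrow> letter set option" where
  "eS n i C =
    (if i = n then (if Neg n \<in> C then Some (C - {Neg n} \<union> {Pos n}) else None)
     else if 1 \<le> i \<and> i < n then
       (if Pos (i + 1) \<in> C \<and> Neg i \<in> C
        then Some (C - {Pos (i + 1), Neg i} \<union> {Pos i, Neg (i + 1)}) else None)
     else None)"

definition Cn :: "nat \<Rightarrow> letter set" where
  "Cn n = Pos ` {1..n}"

definition tri :: "nat \<Rightarrow> letter \<Rightarrow> letter set \<Rightarrow> bool" where
  "tri n x C \<longleftrightarrow> \<not> rank n x \<le> Max (rank n ` C)"

datatype gen = L letter | S "letter set"

type_synonym word = "gen list"

fun fG :: "nat \<Rightarrow> nat \<Rightarrow> gen \<Rightarrow> gen option" where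
  "fG n i (L x) = map_option L (fL n i x)"
| "fG n i (S C) = map_option S (fS n i C)"

fun eG :: "nat \<Rightarrow> nat \<Rightarrow> gen \<Rightarrow> gen option" where
  "eG n i (L x) = map_option L (eL n i x)"
| "eG n i (S C) = map_option S (eS n i C)"

fun opow :: "('a \<Rightarrow> 'a option) \<Rightarrow> nat \<Rightarrow> 'a \<Rightarrow> 'a option" where
  "opow g 0 x = Some x"
| "opow g (Suc k) x = Option.bind (opow g k x) g"

definition epsG :: "nat \<Rightarrow> nat \<Rightarrow> gen \<Rightarrow> nat" where
  "epsG n i b = (GREATEST k. opow (eG n i) k b \<noteq> None)"

definition phiG :: "nat \<Rightarrow> nat \<Rightarrow> gen \<Rightarrow> nat" where
  "phiG n i b = (GREATEST k. opow (fG n i) k b \<noteq> None)"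

text \<open>Words u v w... identified with u \<otimes> (v \<otimes> (w \<otimes> ...)) (tensor product is
  associative); tensor rule as in the paper.\<close>
fun epsW :: "nat \<Rightarrow> nat \<Rightarrow> word \<Rightarrow> nat" where
  "epsW n i [] = 0"
| "epsW n i (u # v) = epsG n i u + (epsW n i v - phiG n i u)"

fun phiW :: "nat \<Rightarrow> nat \<Rightarrow> word \<Rightarrow> nat" where
  "phiW n i [] = 0"
| "phiW n i (u # v) = phiW n i v + (phiG n i u - epsW n i v)"

fun fW :: "nat \<Rightarrow> nat \<Rightarrow> word \<Rightarrow> word option" where
  "fW n i [] = None"
| "fW n i (u # v) =
     (if phiG n i u > epsW n i v then map_option (\<lambda>u'. u' # v) (fG n i u)
      else map_option (\<lambda>v'. u # v') (fW n i v))"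

fun eW :: "nat \<Rightarrow> nat \<Rightarrow> word \<Rightarrow> word option" where
  "eW n i [] = None"
| "eW n i (u # v) =
     (if phiG n i u < epsW n i v then map_option (\<lambda>v'. u # v') (eW n i v)
      else map_option (\<lambda>u'. u' # v) (eG n i u))"

fun wtL :: "letter \<Rightarrow> nat \<Rightarrow> real" where
  "wtL (Pos i) j = (if j = i then 1 else 0)"
| "wtL Zero j = 0"
| "wtL (Neg i) j = (if j = i then -1 else 0)"

definition wtS :: "letter set \<Rightarrow> nat \<Rightarrow> real" where
  "wtS C j = (if Pos j \<in> C then 1/2 else if Neg j \<in> C then -1/2 else 0)"

fun wtG :: "gen \<Rightarrow> nat \<Rightarrow> real" where
  "wtG (L x) = wtL x"
| "wtG (S C) = wtS C"

definition wtW :: "word \<Rightarrow> nat \<Rightarrow> real" where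
  "wtW w j = sum_list (map (\<lambda>g. wtG g j) w)"

definition crystal_edges :: "nat \<Rightarrow> (word \<times> word) set" where
  "crystal_edges n = {(w, w'). \<exists>i\<in>{1..n}. fW n i w = Some w' \<or> eW n i w = Some w'}"

definition component :: "nat \<Rightarrow> word \<Rightarrow> word set" where
  "component n v = {w. (v, w) \<in> (crystal_edges n)\<^sup>*}"

definition crystal_iso :: "nat \<Rightarrow> word set \<Rightarrow> word set \<Rightarrow> (word \<Rightarrow> word) \<Rightarrow> bool" where
  "crystal_iso n A B \<Psi> \<longleftrightarrow> bij_betw \<Psi> A B \<and>
     (\<forall>w\<in>A. wtW (\<Psi> w) = wtW w \<and>
        (\<forall>i\<in>{1..n}. fW n i (\<Psi> w) = map_option \<Psi> (fW n i w) \<and>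
                     eW n i (\<Psi> w) = map_option \<Psi> (eW n i w)))"

end

theory Submission
  imports Defs
begin
lemma opow_None_mono: "opow g k x = None \<Longrightarrow> k \<le> m \<Longrightarrow> opow g m x = None"
  by (induction m) (auto simp: le_Suc_eq)

lemma greatest_opow:
  assumes "opow g m x \<noteq> None" "opow g (Suc m) x = None"
  shows "(GREATEST k. opow g k x \<noteq> None) = m"
proof (rule Greatest_equality)
  show "opow g m x \<noteq> None" by fact
  fix y assume "opow g y x \<noteq> None"
  then show "y \<le> m" using opow_None_mono[OF assms(2), of y] by (cases "y \<le> m") auto
qed

lemma greatest_opow3:
  assumes "opow g 3 b = None"
  shows "(GREATEST k. opow g k b \<noteq> None) =
     (if g b = None then 0 else if Option.bind (g b) g = None then 1 else 2)"
proof -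
  have o1: "opow g 1 b = g b" by simp
  have o2: "opow g 2 b = Option.bind (g b) g" by (simp add: numeral_eq_Suc)
  have o3: "opow g 3 b = Option.bind (Option.bind (g b) g) g" by (simp add: numeral_eq_Suc)
  show ?thesis
  proof (cases "g b = None")
    case True
    then show ?thesis using greatest_opow[of g 0 b] by simp
  next
    case F1: False
    show ?thesis
    proof (cases "Option.bind (g b) g = None")
      case True
      then show ?thesis using F1 greatest_opow[of g 1 b] o1 o2 by simp
    next
      case False
      then show ?thesis using F1 greatest_opow[of g 2 b] o2 o3 assms
        by (simp add: numeral_eq_Suc)
    qed
  qed
qed

definition phiL :: "nat \<Rightarrow> nat \<Rightarrow> letter \<Rightarrow> nat" where
  "phiL n i x = (if i = n then (case x of Pos j \<Rightarrow> if j = n then 2 else 0 | Zero \<Rightarrow> 1 | Neg j \<Rightarrow> 0)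
     else if 1 \<le> i \<and> i < n then (case x of Pos j \<Rightarrow> if j = i then 1 else 0 | Zero \<Rightarrow> 0
        | Neg j \<Rightarrow> if j = i + 1 then 1 else 0) else 0)"

definition epsL :: "nat \<Rightarrow> nat \<Rightarrow> letter \<Rightarrow> nat" where
  "epsL n i x = (if i = n then (case x of Pos j \<Rightarrow> 0 | Zero \<Rightarrow> 1 | Neg j \<Rightarrow> if j = n then 2 else 0)
     else if 1 \<le> i \<and> i < n then (case x of Pos j \<Rightarrow> if j = i + 1 then 1 else 0 | Zero \<Rightarrow> 0
        | Neg j \<Rightarrow> if j = i then 1 else 0) else 0)"

definition phiS :: "nat \<Rightarrow> nat \<Rightarrow> letter set \<Rightarrow> nat" where
  "phiS n i C = (if i = n then (if Pos n \<in> C then 1 else 0)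
     else if 1 \<le> i \<and> i < n then (if Pos i \<in> C \<and> Neg (i + 1) \<in> C then 1 else 0) else 0)"

definition epsS :: "nat \<Rightarrow> nat \<Rightarrow> letter set \<Rightarrow> nat" where
  "epsS n i C = (if i = n then (if Neg n \<in> C then 1 else 0)
     else if 1 \<le> i \<and> i < n then (if Pos (i + 1) \<in> C \<and> Neg i \<in> C then 1 else 0) else 0)"

lemma phiG_L: "phiG n i (L x) = phiL n i x"
  unfolding phiG_def
  by (subst greatest_opow3) (auto simp: numeral_eq_Suc fL_def phiL_def split: letter.splits if_splits)

lemma epsG_L: "epsG n i (L x) = epsL n i x"
  unfolding epsG_def
  by (subst greatest_opow3) (auto simp: numeral_eq_Suc eL_def epsL_def split: letter.splits if_splits)

lemma phiG_S: "phiG n i (S C) = phiS n i C"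
  unfolding phiG_def
  by (subst greatest_opow3) (auto simp: numeral_eq_Suc fS_def phiS_def split: if_splits)

lemma epsG_S: "epsG n i (S C) = epsS n i C"
  unfolding epsG_def
  by (subst greatest_opow3) (auto simp: numeral_eq_Suc eS_def epsS_def split: if_splits)

definition goodG :: "nat \<Rightarrow> gen \<Rightarrow> bool" where
  "goodG n g = (case g of L x \<Rightarrow> valid_letter n x | S C \<Rightarrow> is_spin n C)"

definition alpha :: "nat \<Rightarrow> nat \<Rightarrow> nat \<Rightarrow> real" where
  "alpha n i j = (if i = n then (if j = n then 1 else 0)
                  else (if j = i then 1 else if j = i + 1 then -1 else 0))"

definition hh :: "nat \<Rightarrow> nat \<Rightarrow> (nat \<Rightarrow> real) \<Rightarrow> real" where
  "hh n i W = (if i = n then 2 * W n else W i - W (i + 1))"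

lemma spin_PN: "is_spin n C \<Longrightarrow> 1 \<le> j \<Longrightarrow> j \<le> n \<Longrightarrow> (Neg j \<in> C) = (Pos j \<notin> C)"
  unfolding is_spin_def by auto

lemma spin_mem: "is_spin n C \<Longrightarrow> t \<in> C \<Longrightarrow> t \<noteq> Zero \<and> valid_letter n t"
  unfolding is_spin_def by auto

lemma spin_Pos: "is_spin n C \<Longrightarrow> Pos j \<in> C \<Longrightarrow> 1 \<le> j \<and> j \<le> n"
  using spin_mem[of n C "Pos j"] by auto

lemma spin_Neg: "is_spin n C \<Longrightarrow> Neg j \<in> C \<Longrightarrow> 1 \<le> j \<and> j \<le> n"
  using spin_mem[of n C "Neg j"] by auto

lemma spin_Zero: "is_spin n C \<Longrightarrow> Zero \<notin> C"
  using spin_mem by blast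

lemma spin_iff: "is_spin n C \<longleftrightarrow> (\<forall>t\<in>C. t \<noteq> Zero \<and> valid_letter n t) \<and>
     (\<forall>i. 1 \<le> i \<and> i \<le> n \<longrightarrow> (Pos i \<in> C) = (Neg i \<notin> C))"
  unfolding is_spin_def by auto

lemma fS_spin:
  assumes "is_spin n C" "fS n i C = Some C'"
  shows "is_spin n C'"
  using assms unfolding fS_def spin_iff
  by (auto split: if_splits)

lemma eS_spin:
  assumes "is_spin n C" "eS n i C = Some C'"
  shows "is_spin n C'"
  using assms unfolding eS_def spin_iff
  by (auto split: if_splits)


lemma fG_pos: "(fG n i g \<noteq> None) = (phiG n i g > 0)"
  by (cases g) (auto simp: phiG_L phiG_S phiL_def fL_def phiS_def fS_def split: letter.splits)

lemma eG_pos: "(eG n i g \<noteq> None) = (epsG n i g > 0)"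
  by (cases g) (auto simp: epsG_L epsG_S epsL_def eL_def epsS_def eS_def split: letter.splits)

lemma fG_props:
  assumes "goodG n g" "fG n i g = Some g'" "1 \<le> i" "i \<le> n"
  shows "goodG n g' \<and> eG n i g' = Some g \<and> phiG n i g' = phiG n i g - 1 \<and>
         epsG n i g' = epsG n i g + 1 \<and> (\<forall>j. wtG g' j = wtG g j - alpha n i j)"
proof (cases g)
  case (L x)
  with assms show ?thesis
    by (auto simp: goodG_def phiG_L epsG_L phiL_def epsL_def fL_def eL_def alpha_def
        split: letter.splits if_splits)
next
  case (S C)
  have sp: "is_spin n C" using assms S by (simp add: goodG_def)
  show ?thesis
  proof (cases "i = n")
    case True
    then have P: "Pos n \<in> C" and g': "g' = S (C - {Pos n} \<union> {Neg n})"
      using assms S by (auto simp: fS_def split: if_splits)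
    have N: "Neg n \<notin> C" using P spin_PN[OF sp, of n] assms by auto
    have e: "C - {Pos n} \<union> {Neg n} - {Neg n} \<union> {Pos n} = C" using P N by auto
    show ?thesis using True P N g' S assms e
      by (auto simp: goodG_def phiG_S epsG_S phiS_def epsS_def fS_def eS_def alpha_def wtS_def
          intro: fS_spin)
  next
    case False
    then have i: "1 \<le> i" "i < n" using assms by auto
    then have P: "Pos i \<in> C" "Neg (i+1) \<in> C" and g': "g' = S (C - {Pos i, Neg (i+1)} \<union> {Pos (i+1), Neg i})"
      using assms S False by (auto simp: fS_def split: if_splits)
    have N: "Neg i \<notin> C" "Pos (i+1) \<notin> C" using P spin_PN[OF sp, of i] spin_PN[OF sp, of "i+1"] i by auto
    have e: "C - {Pos i, Neg (i+1)} \<union> {Pos (i+1), Neg i} - {Pos (i+1), Neg i} \<union> {Pos i, Neg (i+1)} = C" 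
      using P N by auto
    show ?thesis using False i P N g' S assms e
      by (auto simp: goodG_def phiG_S epsG_S phiS_def epsS_def fS_def eS_def alpha_def wtS_def
          intro: fS_spin)
  qed
qed

lemma eG_props:
  assumes "goodG n g" "eG n i g = Some g'" "1 \<le> i" "i \<le> n"
  shows "goodG n g' \<and> fG n i g' = Some g \<and> epsG n i g' = epsG n i g - 1 \<and>
         phiG n i g' = phiG n i g + 1 \<and> (\<forall>j. wtG g' j = wtG g j + alpha n i j)"
proof (cases g)
  case (L x)
  with assms show ?thesis
    by (auto simp: goodG_def phiG_L epsG_L phiL_def epsL_def fL_def eL_def alpha_def
        split: letter.splits if_splits)
next
  case (S C)
  have sp: "is_spin n C" using assms S by (simp add: goodG_def)
  show ?thesis
  proof (cases "i = n")
    case True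
    then have P: "Neg n \<in> C" and g': "g' = S (C - {Neg n} \<union> {Pos n})"
      using assms S by (auto simp: eS_def split: if_splits)
    have N: "Pos n \<notin> C" using P spin_PN[OF sp, of n] assms by auto
    have e: "C - {Neg n} \<union> {Pos n} - {Pos n} \<union> {Neg n} = C" using P N by auto
    show ?thesis using True P N g' S assms e
      by (auto simp: goodG_def phiG_S epsG_S phiS_def epsS_def fS_def eS_def alpha_def wtS_def
          intro: eS_spin)
  next
    case False
    then have i: "1 \<le> i" "i < n" using assms by auto
    then have P: "Pos (i+1) \<in> C" "Neg i \<in> C" and g': "g' = S (C - {Pos (i+1), Neg i} \<union> {Pos i, Neg (i+1)})"
      using assms S False by (auto simp: eS_def split: if_splits)
    have N: "Neg (i+1) \<notin> C" "Pos i \<notin> C" using P spin_PN[OF sp, of i] spin_PN[OF sp, of "i+1"] i by auto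
    have e: "C - {Pos (i+1), Neg i} \<union> {Pos i, Neg (i+1)} - {Pos i, Neg (i+1)} \<union> {Pos (i+1), Neg i} = C" 
      using P N by auto
    show ?thesis using False i P N g' S assms e
      by (auto simp: goodG_def phiG_S epsG_S phiS_def epsS_def fS_def eS_def alpha_def wtS_def
          intro: eS_spin)
  qed
qed

lemma G_h:
  assumes "goodG n g" "1 \<le> i" "i \<le> n"
  shows "real (phiG n i g) - real (epsG n i g) = hh n i (wtG g)"
proof (cases g)
  case (L x)
  with assms show ?thesis
    by (auto simp: goodG_def phiG_L epsG_L phiL_def epsL_def hh_def split: letter.splits)
next
  case (S C)
  have sp: "is_spin n C" using assms S by (simp add: goodG_def)
  show ?thesis
  proof (cases "i = n")
    case True
    then show ?thesis using S spin_PN[OF sp, of n] assms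
      by (auto simp: phiG_S epsG_S phiS_def epsS_def hh_def wtS_def)
  next
    case False
    then show ?thesis using S spin_PN[OF sp, of i] spin_PN[OF sp, of "i+1"] assms
      by (auto simp: phiG_S epsG_S phiS_def epsS_def hh_def wtS_def)
  qed
qed

definition goodW :: "nat \<Rightarrow> word \<Rightarrow> bool" where
  "goodW n w = list_all (goodG n) w"

lemma wtW_Nil[simp]: "wtW [] j = 0" by (simp add: wtW_def)
lemma wtW_Cons[simp]: "wtW (u # v) j = wtG u j + wtW v j" by (simp add: wtW_def)

lemma fW_pos: "(fW n i w \<noteq> None) = (phiW n i w > 0)"
proof (induction w)
  case Nil then show ?case by simp
next
  case (Cons u v)
  show ?case using Cons fG_pos[of n i u] by auto
qed

lemma eW_pos: "(eW n i w \<noteq> None) = (epsW n i w > 0)"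
proof (induction w)
  case Nil then show ?case by simp
next
  case (Cons u v)
  show ?case using Cons eG_pos[of n i u] by auto
qed

lemma fW_props:
  assumes "goodW n w" "fW n i w = Some w'" "1 \<le> i" "i \<le> n"
  shows "goodW n w' \<and> eW n i w' = Some w \<and> phiW n i w' = phiW n i w - 1 \<and>
         epsW n i w' = epsW n i w + 1 \<and> (\<forall>j. wtW w' j = wtW w j - alpha n i j)"
  using assms
proof (induction w arbitrary: w')
  case Nil then show ?case by simp
next
  case (Cons u v)
  have gu: "goodG n u" and gv: "goodW n v" using Cons.prems by (auto simp: goodW_def)
  show ?case
  proof (cases "phiG n i u > epsW n i v")
    case True
    then obtain u' where u': "fG n i u = Some u'" and w': "w' = u' # v" using Cons.prems by auto
    note P = fG_props[OF gu u' Cons.prems(3,4)]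
    show ?thesis using True P w' gv u' by (auto simp: goodW_def)
  next
    case False
    then obtain v' where v': "fW n i v = Some v'" and w': "w' = u # v'" using Cons.prems by auto
    note P = Cons.IH[OF gv v' Cons.prems(3,4)]
    have pos: "phiW n i v > 0" using fW_pos[of n i v] v' by auto
    show ?thesis using False P w' gu pos by (auto simp: goodW_def)
  qed
qed

lemma eW_props:
  assumes "goodW n w" "eW n i w = Some w'" "1 \<le> i" "i \<le> n"
  shows "goodW n w' \<and> fW n i w' = Some w \<and> epsW n i w' = epsW n i w - 1 \<and>
         phiW n i w' = phiW n i w + 1 \<and> (\<forall>j. wtW w' j = wtW w j + alpha n i j)"
  using assms
proof (induction w arbitrary: w')
  case Nil then show ?case by simp
next
  case (Cons u v)
  have gu: "goodG n u" and gv: "goodW n v" using Cons.prems by (auto simp: goodW_def)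
  show ?case
  proof (cases "phiG n i u < epsW n i v")
    case True
    then obtain v' where v': "eW n i v = Some v'" and w': "w' = u # v'" using Cons.prems by auto
    note P = Cons.IH[OF gv v' Cons.prems(3,4)]
    show ?thesis using True P w' gu by (auto simp: goodW_def)
  next
    case False
    then obtain u' where u': "eG n i u = Some u'" and w': "w' = u' # v" using Cons.prems by auto
    note P = eG_props[OF gu u' Cons.prems(3,4)]
    have pos: "epsG n i u > 0" using eG_pos[of n i u] u' by auto
    show ?thesis using False P w' gv pos by (auto simp: goodW_def)
  qed
qed

lemma hh_add: "hh n i (\<lambda>j. A j + B j) = hh n i A + hh n i B"
  by (simp add: hh_def)

lemma W_h:
  assumes "goodW n w" "1 \<le> i" "i \<le> n"
  shows "real (phiW n i w) - real (epsW n i w) = hh n i (wtW w)"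
  using assms
proof (induction w)
  case Nil then show ?case by (simp add: hh_def)
next
  case (Cons u v)
  have gu: "goodG n u" and gv: "goodW n v" using Cons.prems by (auto simp: goodW_def)
  have e: "wtW (u # v) = (\<lambda>j. wtG u j + wtW v j)" by (rule ext) simp
  have "hh n i (wtW (u # v)) = hh n i (wtG u) + hh n i (wtW v)"
    unfolding e by (rule hh_add)
  moreover have "real (phiG n i u - epsW n i v) - real (epsW n i v - phiG n i u)
      = real (phiG n i u) - real (epsW n i v)" by (cases "phiG n i u \<le> epsW n i v") (auto simp: of_nat_diff)
  ultimately show ?case using Cons.IH[OF gv Cons.prems(2,3)] G_h[OF gu Cons.prems(2,3)]
    by (simp only: phiW.simps epsW.simps of_nat_add)
qed

definition closedX :: "nat \<Rightarrow> word set \<Rightarrow> bool" where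
  "closedX n X \<longleftrightarrow> (\<forall>w\<in>X. \<forall>i\<in>{1..n}. (\<forall>w'. fW n i w = Some w' \<longrightarrow> w' \<in> X) \<and>
                                       (\<forall>w'. eW n i w = Some w' \<longrightarrow> w' \<in> X))"

lemma edge_iff: "(w, w') \<in> crystal_edges n \<longleftrightarrow> (\<exists>i\<in>{1..n}. fW n i w = Some w' \<or> eW n i w = Some w')"
  by (simp add: crystal_edges_def)

lemma comp_self: "v \<in> component n v"
  by (simp add: component_def)

lemma comp_step: "w \<in> component n v \<Longrightarrow> (w, w') \<in> crystal_edges n \<Longrightarrow> w' \<in> component n v"
  unfolding component_def by (auto intro: rtrancl_into_rtrancl)

lemma comp_f: "w \<in> component n v \<Longrightarrow> i \<in> {1..n} \<Longrightarrow> fW n i w = Some w' \<Longrightarrow> w' \<in> component n v"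
  by (rule comp_step) (auto simp: edge_iff)

lemma comp_e: "w \<in> component n v \<Longrightarrow> i \<in> {1..n} \<Longrightarrow> eW n i w = Some w' \<Longrightarrow> w' \<in> component n v"
  by (rule comp_step) (auto simp: edge_iff)

lemma comp_sub:
  assumes "v \<in> X" "closedX n X"
  shows "component n v \<subseteq> X"
proof
  fix w assume "w \<in> component n v"
  then have "(v, w) \<in> (crystal_edges n)\<^sup>*" by (simp add: component_def)
  then show "w \<in> X"
  proof (induction rule: rtrancl_induct)
    case base then show ?case using assms by simp
  next
    case (step y z)
    then obtain i where i: "i \<in> {1..n}" "fW n i y = Some z \<or> eW n i y = Some z"
      by (auto simp: edge_iff)
    then show ?case using assms(2) step.IH unfolding closedX_def by metis
  qed
qed

lemma comp_good_sym:
  assumes "(v, w) \<in> (crystal_edges n)\<^sup>*" "goodW n v"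
  shows "goodW n w \<and> (w, v) \<in> (crystal_edges n)\<^sup>*"
  using assms
proof (induction rule: rtrancl_induct)
  case base then show ?case by simp
next
  case (step y z)
  have gy: "goodW n y" and yv: "(y, v) \<in> (crystal_edges n)\<^sup>*" using step by auto
  obtain i where i: "i \<in> {1..n}" "fW n i y = Some z \<or> eW n i y = Some z"
    using step(2) by (auto simp: edge_iff)
  have i1: "1 \<le> i" "i \<le> n" using i by auto
  have "goodW n z \<and> (z, y) \<in> crystal_edges n"
  proof (cases "fW n i y = Some z")
    case True
    have "goodW n z" "eW n i z = Some y" using fW_props[OF gy True i1] by auto
    then show ?thesis using i by (auto simp: edge_iff)
  next
    case False
    then have e: "eW n i y = Some z" using i by auto
    have "goodW n z" "fW n i z = Some y" using eW_props[OF gy e i1] by auto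
    then show ?thesis using i by (auto simp: edge_iff)
  qed
  then show ?case using yv by (meson converse_rtrancl_into_rtrancl)
qed

lemma comp_good: "goodW n v \<Longrightarrow> w \<in> component n v \<Longrightarrow> goodW n w"
  unfolding component_def using comp_good_sym[of v w n] by simp

lemma comp_sym: "goodW n v \<Longrightarrow> w \<in> component n v \<Longrightarrow> v \<in> component n w"
  unfolding component_def using comp_good_sym[of v w n] by simp

lemma comp_trans: "w \<in> component n v \<Longrightarrow> u \<in> component n w \<Longrightarrow> u \<in> component n v"
  by (auto simp: component_def)

lemma phi_pres:
  assumes X: "X = component n x0" "goodW n x0"
  and wt: "\<forall>w\<in>X. wtW (\<Psi> w) = wtW w \<and> goodW n (\<Psi> w)"
  and fc: "\<forall>w\<in>X. \<forall>i\<in>{1..n}. fW n i (\<Psi> w) = map_option \<Psi> (fW n i w)"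
  and i: "i \<in> {1..n}"
  shows "\<forall>w\<in>X. phiW n i w = k \<longrightarrow> phiW n i (\<Psi> w) = k"
proof (induction k)
  case 0
  show ?case
  proof (intro ballI impI)
    fix w assume w: "w \<in> X" "phiW n i w = 0"
    then have "fW n i w = None" using fW_pos[of n i w] by auto
    then have "fW n i (\<Psi> w) = None" using fc w i by auto
    then show "phiW n i (\<Psi> w) = 0" using fW_pos[of n i "\<Psi> w"] by auto
  qed
next
  case (Suc k)
  show ?case
  proof (intro ballI impI)
    fix w assume w: "w \<in> X" "phiW n i w = Suc k"
    have gw: "goodW n w" using w X comp_good by blast
    have i1: "1 \<le> i" "i \<le> n" using i by auto
    obtain w1 where w1: "fW n i w = Some w1" using fW_pos[of n i w] w by auto
    have w1X: "w1 \<in> X" using comp_f[of w n x0 i w1] w X w1 i by auto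
    have pw1: "phiW n i w1 = k" using fW_props[OF gw w1 i1] w by auto
    have IH: "phiW n i (\<Psi> w1) = k" using Suc w1X pw1 by auto
    have f2: "fW n i (\<Psi> w) = Some (\<Psi> w1)" using fc w w1 i by auto
    have g2: "goodW n (\<Psi> w)" using wt w by auto
    have "phiW n i (\<Psi> w1) = phiW n i (\<Psi> w) - 1" using fW_props[OF g2 f2 i1] by auto
    moreover have "phiW n i (\<Psi> w) > 0" using fW_pos[of n i "\<Psi> w"] f2 by auto
    ultimately show "phiW n i (\<Psi> w) = Suc k" using IH by auto
  qed
qed

lemma eps_pres:
  assumes X: "X = component n x0" "goodW n x0"
  and wt: "\<forall>w\<in>X. wtW (\<Psi> w) = wtW w \<and> goodW n (\<Psi> w)"
  and fc: "\<forall>w\<in>X. \<forall>i\<in>{1..n}. fW n i (\<Psi> w) = map_option \<Psi> (fW n i w)"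
  and i: "i \<in> {1..n}" and w: "w \<in> X"
  shows "epsW n i (\<Psi> w) = epsW n i w \<and> phiW n i (\<Psi> w) = phiW n i w"
proof -
  have p: "phiW n i (\<Psi> w) = phiW n i w" using phi_pres[OF X wt fc i] w by auto
  have gw: "goodW n w" using w X comp_good by blast
  have g2: "goodW n (\<Psi> w)" using wt w by auto
  have i1: "1 \<le> i" "i \<le> n" using i by auto
  have "real (phiW n i w) - real (epsW n i w) = hh n i (wtW w)" using W_h[OF gw i1] .
  moreover have "real (phiW n i (\<Psi> w)) - real (epsW n i (\<Psi> w)) = hh n i (wtW (\<Psi> w))" using W_h[OF g2 i1] .
  ultimately show ?thesis using p wt w by auto
qed

lemma e_comm:
  assumes X: "X = component n x0" "goodW n x0"
  and wt: "\<forall>w\<in>X. wtW (\<Psi> w) = wtW w \<and> goodW n (\<Psi> w)"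
  and fc: "\<forall>w\<in>X. \<forall>i\<in>{1..n}. fW n i (\<Psi> w) = map_option \<Psi> (fW n i w)"
  and i: "i \<in> {1..n}" and w: "w \<in> X"
  shows "eW n i (\<Psi> w) = map_option \<Psi> (eW n i w)"
proof (cases "eW n i w")
  case None
  then have "epsW n i w = 0" using eW_pos[of n i w] by auto
  then have "epsW n i (\<Psi> w) = 0" using eps_pres[OF X wt fc i w] by auto
  then show ?thesis using None eW_pos[of n i "\<Psi> w"] by auto
next
  case (Some w0)
  have gw: "goodW n w" using w X comp_good by blast
  have i1: "1 \<le> i" "i \<le> n" using i by auto
  have w0X: "w0 \<in> X" using comp_e[of w n x0 i w0] w X Some i by auto
  have "fW n i w0 = Some w" using eW_props[OF gw Some i1] by auto
  then have f2: "fW n i (\<Psi> w0) = Some (\<Psi> w)" using fc w0X i by auto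
  have g2: "goodW n (\<Psi> w0)" using wt w0X by auto
  have "eW n i (\<Psi> w) = Some (\<Psi> w0)" using fW_props[OF g2 f2 i1] by auto
  then show ?thesis using Some by simp
qed

lemma iso_from_f:
  assumes X: "X = component n x0" "goodW n x0"
  and wt: "\<forall>w\<in>X. wtW (\<Psi> w) = wtW w \<and> goodW n (\<Psi> w)"
  and fc: "\<forall>w\<in>X. \<forall>i\<in>{1..n}. fW n i (\<Psi> w) = map_option \<Psi> (fW n i w)"
  and hw0: "\<forall>i\<in>{1..n}. eW n i x0 = None"
  and uhw: "\<forall>w\<in>X. (\<forall>i\<in>{1..n}. eW n i w = None) \<longrightarrow> w = x0"
  shows "crystal_iso n X (component n (\<Psi> x0)) \<Psi>"
proof -
  have ec: "\<forall>w\<in>X. \<forall>i\<in>{1..n}. eW n i (\<Psi> w) = map_option \<Psi> (eW n i w)"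
    using e_comm[OF X wt fc] by blast
  have x0X: "x0 \<in> X" using X comp_self by blast
  have injP: "\<forall>w2\<in>X. \<Psi> w1 = \<Psi> w2 \<longrightarrow> w1 = w2" if w1: "w1 \<in> X" for w1
  proof -
    have "(x0, w1) \<in> (crystal_edges n)\<^sup>*" using w1 X by (simp add: component_def)
    then show ?thesis
    proof (induction rule: rtrancl_induct)
      case base
      show ?case
      proof (intro ballI impI)
        fix w2 assume w2: "w2 \<in> X" "\<Psi> x0 = \<Psi> w2"
        have "\<forall>i\<in>{1..n}. eW n i w2 = None"
        proof
          fix i assume i: "i \<in> {1..n}"
          have "eW n i (\<Psi> x0) = map_option \<Psi> (eW n i x0)" using ec x0X i by blast
          then have "eW n i (\<Psi> w2) = None" using hw0 i w2(2) by simp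
          moreover have "eW n i (\<Psi> w2) = map_option \<Psi> (eW n i w2)" using ec w2(1) i by blast
          ultimately have "map_option \<Psi> (eW n i w2) = None" by simp
          then show "eW n i w2 = None" by simp
        qed
        then show "x0 = w2" using uhw w2 by auto
      qed
    next
      case (step y z)
      have yX: "y \<in> X" using step(1) X by (simp add: component_def)
      have zX: "z \<in> X" using step(1,2) X by (auto simp: component_def intro: rtrancl_into_rtrancl)
      obtain i where i: "i \<in> {1..n}" "fW n i y = Some z \<or> eW n i y = Some z"
        using step(2) by (auto simp: edge_iff)
      have i1: "1 \<le> i" "i \<le> n" using i by auto
      have gy: "goodW n y" using yX X comp_good[of n x0 y] by simp
      show ?case
      proof (intro ballI impI)
        fix w2 assume w2: "w2 \<in> X" "\<Psi> z = \<Psi> w2"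
        have gw2: "goodW n w2" using w2 X comp_good[of n x0 w2] by simp
        show "z = w2"
        proof (cases "fW n i y = Some z")
          case True
          have ez: "eW n i z = Some y" using fW_props[OF gy True i1] by auto
          have "eW n i (\<Psi> z) = Some (\<Psi> y)" using ec zX i ez by auto
          moreover have "eW n i (\<Psi> w2) = map_option \<Psi> (eW n i w2)" using ec w2(1) i by blast
          ultimately have "map_option \<Psi> (eW n i w2) = Some (\<Psi> y)" using w2(2) by simp
          then obtain v2 where v2: "eW n i w2 = Some v2" "\<Psi> v2 = \<Psi> y" by auto
          have v2X: "v2 \<in> X" using comp_e[of w2 n x0 i v2] w2 X v2 i by auto
          have "y = v2" using step.IH v2X v2 by auto
          moreover have "fW n i v2 = Some w2" using eW_props[OF gw2 v2(1) i1] by auto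
          ultimately show "z = w2" using True by auto
        next
          case False
          then have e: "eW n i y = Some z" using i by auto
          have fz: "fW n i z = Some y" using eW_props[OF gy e i1] by auto
          have "fW n i (\<Psi> z) = Some (\<Psi> y)" using fc zX i fz by auto
          moreover have "fW n i (\<Psi> w2) = map_option \<Psi> (fW n i w2)" using fc w2(1) i by blast
          ultimately have "map_option \<Psi> (fW n i w2) = Some (\<Psi> y)" using w2(2) by simp
          then obtain v2 where v2: "fW n i w2 = Some v2" "\<Psi> v2 = \<Psi> y" by auto
          have v2X: "v2 \<in> X" using comp_f[of w2 n x0 i v2] w2 X v2 i by auto
          have "y = v2" using step.IH v2X v2 by auto
          moreover have "eW n i v2 = Some w2" using fW_props[OF gw2 v2(1) i1] by auto
          ultimately show "z = w2" using e by auto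
        qed
      qed
    qed
  qed
  have inj: "inj_on \<Psi> X" unfolding inj_on_def using injP by blast
  have sub1: "\<Psi> ` X \<subseteq> component n (\<Psi> x0)"
  proof
    fix y assume "y \<in> \<Psi> ` X"
    then obtain w where w: "w \<in> X" "y = \<Psi> w" by auto
    have "(x0, w) \<in> (crystal_edges n)\<^sup>*" using w X by (simp add: component_def)
    then have "(\<Psi> x0, \<Psi> w) \<in> (crystal_edges n)\<^sup>*"
    proof (induction rule: rtrancl_induct)
      case base then show ?case by simp
    next
      case (step a b)
      have aX: "a \<in> X" using step(1) X by (simp add: component_def)
      obtain i where i: "i \<in> {1..n}" "fW n i a = Some b \<or> eW n i a = Some b"
        using step(2) by (auto simp: edge_iff)
      have "fW n i (\<Psi> a) = map_option \<Psi> (fW n i a)" "eW n i (\<Psi> a) = map_option \<Psi> (eW n i a)"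
        using fc ec aX i(1) by blast+
      then have "fW n i (\<Psi> a) = Some (\<Psi> b) \<or> eW n i (\<Psi> a) = Some (\<Psi> b)"
        using i(2) by auto
      then have "(\<Psi> a, \<Psi> b) \<in> crystal_edges n" using i by (auto simp: edge_iff)
      then show ?case using step.IH by (meson rtrancl_into_rtrancl)
    qed
    then show "y \<in> component n (\<Psi> x0)" using w by (simp add: component_def)
  qed
  have cl: "closedX n (\<Psi> ` X)"
    unfolding closedX_def
  proof (intro ballI conjI allI impI)
    fix y i y' assume y: "y \<in> \<Psi> ` X" and i: "i \<in> {1..n}"
    then obtain w where w: "w \<in> X" "y = \<Psi> w" by auto
    { assume "fW n i y = Some y'"
      moreover have "fW n i (\<Psi> w) = map_option \<Psi> (fW n i w)" using fc w(1) i by blast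
      ultimately have "map_option \<Psi> (fW n i w) = Some y'" using w(2) by simp
      then obtain w' where w': "fW n i w = Some w'" "y' = \<Psi> w'" by auto
      have "w' \<in> X" using comp_f[of w n x0 i w'] w X w' i by auto
      then show "y' \<in> \<Psi> ` X" using w' by auto }
    { assume "eW n i y = Some y'"
      moreover have "eW n i (\<Psi> w) = map_option \<Psi> (eW n i w)" using ec w(1) i by blast
      ultimately have "map_option \<Psi> (eW n i w) = Some y'" using w(2) by simp
      then obtain w' where w': "eW n i w = Some w'" "y' = \<Psi> w'" by auto
      have "w' \<in> X" using comp_e[of w n x0 i w'] w X w' i by auto
      then show "y' \<in> \<Psi> ` X" using w' by auto }
  qed
  have sub2: "component n (\<Psi> x0) \<subseteq> \<Psi> ` X" using comp_sub[OF _ cl] x0X by blast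
  have "bij_betw \<Psi> X (component n (\<Psi> x0))" using inj sub1 sub2 by (auto simp: bij_betw_def)
  then show ?thesis unfolding crystal_iso_def using wt fc ec by simp
qed

lemma iso_unique:
  assumes I1: "crystal_iso n X Y \<Psi>1" and I2: "crystal_iso n X Y \<Psi>2"
  and X: "X = component n x0"
  and hw0: "\<forall>i\<in>{1..n}. eW n i x0 = None"
  and uhw: "\<forall>w\<in>X. (\<forall>i\<in>{1..n}. eW n i w = None) \<longrightarrow> w = x0"
  shows "\<forall>w\<in>X. \<Psi>1 w = \<Psi>2 w"
proof -
  have x0X: "x0 \<in> X" using X comp_self by blast
  have b1: "bij_betw \<Psi>1 X Y" and b2: "bij_betw \<Psi>2 X Y" using I1 I2 by (auto simp: crystal_iso_def)
  have "\<Psi>2 x0 \<in> Y" using b2 x0X bij_betwE by blast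
  then obtain w where w: "w \<in> X" "\<Psi>1 w = \<Psi>2 x0" using b1 by (auto simp: bij_betw_def)
  have "\<forall>i\<in>{1..n}. eW n i w = None"
  proof
    fix i assume i: "i \<in> {1..n}"
    have "eW n i (\<Psi>2 x0) = None" using I2 x0X i hw0 by (auto simp: crystal_iso_def)
    then have "map_option \<Psi>1 (eW n i w) = None" using I1 w i unfolding crystal_iso_def by metis
    then show "eW n i w = None" by simp
  qed
  then have "w = x0" using uhw w by auto
  then have base: "\<Psi>1 x0 = \<Psi>2 x0" using w by simp
  show ?thesis
  proof
    fix w assume "w \<in> X"
    then have "(x0, w) \<in> (crystal_edges n)\<^sup>*" using X by (simp add: component_def)
    then show "\<Psi>1 w = \<Psi>2 w"
    proof (induction rule: rtrancl_induct)
      case base then show ?case by (rule \<open>\<Psi>1 x0 = \<Psi>2 x0\<close>)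
    next
      case (step a b)
      have aX: "a \<in> X" using step(1) X by (simp add: component_def)
      obtain i where i: "i \<in> {1..n}" "fW n i a = Some b \<or> eW n i a = Some b"
        using step(2) by (auto simp: edge_iff)
      have c1: "fW n i (\<Psi>1 a) = map_option \<Psi>1 (fW n i a)" "eW n i (\<Psi>1 a) = map_option \<Psi>1 (eW n i a)"
        using I1 aX i by (auto simp: crystal_iso_def)
      have c2: "fW n i (\<Psi>2 a) = map_option \<Psi>2 (fW n i a)" "eW n i (\<Psi>2 a) = map_option \<Psi>2 (eW n i a)"
        using I2 aX i by (auto simp: crystal_iso_def)
      show ?case using i c1 c2 step.IH by auto
    qed
  qed
qed

lemma fW1: "fW n i [u] = map_option (\<lambda>u'. [u']) (fG n i u)"
  using fG_pos[of n i u] by (cases "fG n i u") auto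

lemma eW1: "eW n i [u] = map_option (\<lambda>u'. [u']) (eG n i u)"
  by simp

lemma epsW1: "epsW n i [u] = epsG n i u" by simp
lemma phiW1: "phiW n i [u] = phiG n i u" by simp

lemma fW2: "fW n i [u, v] = (if phiG n i u > epsG n i v then map_option (\<lambda>u'. [u', v]) (fG n i u)
                            else map_option (\<lambda>v'. [u, v']) (fG n i v))"
  using fG_pos[of n i v] by (auto simp: fW1 option.map_comp comp_def)

lemma eW2: "eW n i [u, v] = (if phiG n i u < epsG n i v then map_option (\<lambda>v'. [u, v']) (eG n i v)
                            else map_option (\<lambda>u'. [u', v]) (eG n i u))"
  by (simp add: option.map_comp comp_def)

lemma epsW2: "epsW n i [u, v] = epsG n i u + (epsG n i v - phiG n i u)" by simp

lemma goodW2: "goodW n [S C, L x] = (is_spin n C \<and> valid_letter n x)"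
  by (simp add: goodW_def goodG_def)
lemma goodW2': "goodW n [L x, S C] = (is_spin n C \<and> valid_letter n x)"
  by (auto simp: goodW_def goodG_def)
lemma goodW1: "goodW n [S C] = is_spin n C"
  by (simp add: goodW_def goodG_def)

lemma spin_sub: "is_spin n C \<Longrightarrow> C \<subseteq> Pos ` {1..n} \<union> Neg ` {1..n}"
proof
  fix t assume "is_spin n C" "t \<in> C"
  then show "t \<in> Pos ` {1..n} \<union> Neg ` {1..n}" using spin_mem[of n C t] by (cases t) auto
qed

lemma spin_finite: "is_spin n C \<Longrightarrow> finite C"
  using spin_sub finite_subset by blast

lemma spin_ne: "is_spin n C \<Longrightarrow> 1 \<le> n \<Longrightarrow> C \<noteq> {}"
  using spin_PN[of n C 1] by auto

lemma tri_iff: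
  assumes "is_spin n C" "1 \<le> n"
  shows "tri n x C \<longleftrightarrow> (\<forall>t\<in>C. rank n t < rank n x)"
proof -
  have f: "finite (rank n ` C)" using spin_finite[OF assms(1)] by simp
  have ne: "rank n ` C \<noteq> {}" using spin_ne[OF assms] by simp
  show ?thesis unfolding tri_def using Max_ge_iff[OF f ne, of "rank n x"] by force
qed

lemma Cn_spin: "is_spin n (Cn n)"
  by (auto simp: is_spin_def Cn_def)

lemma rank_inj:
  assumes "valid_letter n a" "valid_letter n b" "rank n a = rank n b"
  shows "a = b"
  using assms by (cases a; cases b) auto

lemma rank_bound: "valid_letter n a \<Longrightarrow> 1 \<le> rank n a \<and> rank n a \<le> 2 * n + 1"
  by (cases a) auto

lemma fL_rank: "fL n i x = Some x' \<Longrightarrow> 1 \<le> i \<Longrightarrow> i \<le> n \<Longrightarrow> rank n x' = rank n x + 1"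
  by (auto simp: fL_def split: letter.splits if_splits)

lemma eL_rank: "eL n i x = Some x' \<Longrightarrow> 1 \<le> i \<Longrightarrow> i \<le> n \<Longrightarrow> rank n x' + 1 = rank n x"
  by (auto simp: eL_def split: letter.splits if_splits)

lemma fL_valid: "fL n i x = Some x' \<Longrightarrow> 1 \<le> i \<Longrightarrow> i \<le> n \<Longrightarrow> valid_letter n x'"
  by (auto simp: fL_def split: letter.splits if_splits)

lemma eL_valid: "eL n i x = Some x' \<Longrightarrow> 1 \<le> i \<Longrightarrow> i \<le> n \<Longrightarrow> valid_letter n x'"
  by (auto simp: eL_def split: letter.splits if_splits)

definition FullSV :: "nat \<Rightarrow> word set" where
  "FullSV n = {[S C, L x] | C x. is_spin n C \<and> valid_letter n x}"

definition Aset :: "nat \<Rightarrow> word set" where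
  "Aset n = {[S C, L x] | C x. is_spin n C \<and> valid_letter n x \<and> tri n x C}"

definition Bset :: "nat \<Rightarrow> word set" where
  "Bset n = {[S C, L x] | C x. is_spin n C \<and> valid_letter n x \<and> \<not> tri n x C}"

lemma fW_SV_shape:
  assumes "fW n i [S C, L x] = Some w'"
  shows "(phiS n i C > epsL n i x \<and> (\<exists>C'. fS n i C = Some C' \<and> w' = [S C', L x])) \<or>
         (\<not> phiS n i C > epsL n i x \<and> (\<exists>x'. fL n i x = Some x' \<and> w' = [S C, L x']))"
  using assms by (auto simp: fW2 phiG_S epsG_L split: if_splits)

lemma eW_SV_shape:
  assumes "eW n i [S C, L x] = Some w'"
  shows "(phiS n i C < epsL n i x \<and> (\<exists>x'. eL n i x = Some x' \<and> w' = [S C, L x'])) \<or>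
         (\<not> phiS n i C < epsL n i x \<and> (\<exists>C'. eS n i C = Some C' \<and> w' = [S C', L x]))"
  using assms by (auto simp: eW2 phiG_S epsG_L split: if_splits)

lemma FullSV_closed: "closedX n (FullSV n)"
  unfolding closedX_def
proof (intro ballI conjI allI impI)
  fix w i w' assume w: "w \<in> FullSV n" and i: "i \<in> {1..n}"
  then obtain C x where wd: "w = [S C, L x]" "is_spin n C" "valid_letter n x"
    by (auto simp: FullSV_def)
  have gw: "goodW n w" using wd goodW2 by simp
  have i1: "1 \<le> i" "i \<le> n" using i by auto
  { assume f: "fW n i w = Some w'"
    have g': "goodW n w'" using fW_props[OF gw f i1] by simp
    from fW_SV_shape[of n i C x w'] f wd obtain C' x' where "w' = [S C', L x']" by blast
    then show "w' \<in> FullSV n" using g' by (auto simp: FullSV_def goodW2) }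
  { assume f: "eW n i w = Some w'"
    have g': "goodW n w'" using eW_props[OF gw f i1] by simp
    from eW_SV_shape[of n i C x w'] f wd obtain C' x' where "w' = [S C', L x']" by blast
    then show "w' \<in> FullSV n" using g' by (auto simp: FullSV_def goodW2) }
qed

lemma epsW_SV: "epsW n i [S C, L x] = epsS n i C + (epsL n i x - phiS n i C)"
  by (simp add: epsG_S epsG_L phiG_S)

lemma Cn_mem: "Pos j \<in> Cn n \<longleftrightarrow> 1 \<le> j \<and> j \<le> n" "Neg j \<notin> Cn n" "Zero \<notin> Cn n"
  by (auto simp: Cn_def)

lemma hw_SV:
  assumes n: "n \<ge> 2" and sp: "is_spin n C" and v: "valid_letter n x"
  and hw: "\<forall>i\<in>{1..n}. eW n i [S C, L x] = None"
  shows "C = Cn n \<and> (x = Zero \<or> x = Pos 1)"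
proof -
  have E: "epsS n i C = 0 \<and> epsL n i x \<le> phiS n i C" if "1 \<le> i" "i \<le> n" for i
  proof -
    have "eW n i [S C, L x] = None" using hw that by auto
    then have "epsW n i [S C, L x] = 0" using eW_pos[of n i "[S C, L x]"] by auto
    then show ?thesis unfolding epsW_SV by auto
  qed
  have Pn: "Pos n \<in> C" using E[of n] n spin_PN[OF sp, of n] by (auto simp: epsS_def)
  have stp: "Pos j \<in> C" if "1 \<le> j" "j < n" "Pos (Suc j) \<in> C" for j
    using E[of j] that spin_PN[OF sp, of j] by (auto simp: epsS_def)
  have all: "Pos j \<in> C" if "1 \<le> j" "j \<le> n" for j
    using that(2)
  proof (induction j rule: inc_induct)
    case base then show ?case by (rule Pn)
  next
    case (step m)
    show ?case
    proof (cases "m = 0")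
      case True then show ?thesis using that(1) \<open>j \<le> m\<close> by auto
    next
      case False then show ?thesis using stp[of m] step by auto
    qed
  qed
  have CC: "C = Cn n"
  proof
    show "C \<subseteq> Cn n"
    proof
      fix t assume t: "t \<in> C"
      show "t \<in> Cn n"
      proof (cases t)
        case (Pos j) then show ?thesis using spin_Pos[OF sp, of j] t Cn_mem by auto
      next
        case Zero then show ?thesis using spin_Zero[OF sp] t by auto
      next
        case (Neg j) then show ?thesis using spin_Neg[OF sp, of j] t all[of j] spin_PN[OF sp, of j] by auto
      qed
    qed
  next
    show "Cn n \<subseteq> C" using all by (auto simp: Cn_def)
  qed
  have phiCn: "phiS n i (Cn n) = (if i = n then 1 else 0)" if "1 \<le> i" "i \<le> n" for i
    using that by (auto simp: phiS_def Cn_mem)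
  have "x = Zero \<or> x = Pos 1"
  proof (cases x)
    case (Pos j)
    show ?thesis
    proof (rule ccontr)
      assume "\<not> ?thesis"
      then have "j \<ge> 2" "j \<le> n" using Pos v by auto
      then obtain k where k: "j = Suc k" "1 \<le> k" "k < n" by (cases j) auto
      have "epsL n k x \<le> phiS n k C" using E[of k] k by auto
      then show False using phiCn[of k] Pos CC k by (auto simp: epsL_def)
    qed
  next
    case Zero then show ?thesis by simp
  next
    case (Neg j)
    have j: "1 \<le> j" "j \<le> n" using Neg v by auto
    show ?thesis
    proof (cases "j = n")
      case True then show ?thesis using E[of n] phiCn[of n] Neg CC j by (auto simp: epsL_def)
    next
      case False then show ?thesis using E[of j] phiCn[of j] Neg CC j by (auto simp: epsL_def)
    qed
  qed
  then show ?thesis using CC by simp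
qed

lemma hw0_hw: "n \<ge> 2 \<Longrightarrow> \<forall>i\<in>{1..n}. eW n i [S (Cn n), L Zero] = None"
  by (auto simp: eW2 epsG_L phiG_S epsL_def phiS_def Cn_mem eS_def)

lemma hw1_hw: "n \<ge> 2 \<Longrightarrow> \<forall>i\<in>{1..n}. eW n i [S (Cn n), L (Pos 1)] = None"
  by (auto simp: eW2 epsG_L phiG_S epsL_def phiS_def Cn_mem eS_def eL_def)

fun muSV :: "nat \<Rightarrow> word \<Rightarrow> nat" where
  "muSV n [S C, L x] = sum (rank n) C + rank n x"
| "muSV n _ = 0"

lemma sum_swap2:
  fixes f :: "letter \<Rightarrow> nat"
  assumes "finite C" "a1 \<in> C" "a2 \<in> C" "a1 \<noteq> a2" "b1 \<notin> C" "b2 \<notin> C" "b1 \<noteq> b2"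
  shows "sum f (C - {a1, a2} \<union> {b1, b2}) + f a1 + f a2 = sum f C + f b1 + f b2"
proof -
  let ?D = "C - {a1, a2}"
  have fD: "finite ?D" using assms(1) by blast
  have C: "C = ?D \<union> {a1, a2}" using assms(2,3) by blast
  have d1: "?D \<inter> {a1, a2} = {}" by blast
  have d2: "?D \<inter> {b1, b2} = {}" using assms(5,6) by blast
  have "sum f (?D \<union> {a1, a2}) = sum f ?D + sum f {a1, a2}"
    using sum.union_disjoint[OF fD _ d1] by simp
  then have e1: "sum f C = sum f ?D + sum f {a1, a2}" using C by simp
  have e2: "sum f (?D \<union> {b1, b2}) = sum f ?D + sum f {b1, b2}"
    using sum.union_disjoint[OF fD _ d2] by simp
  have s1: "sum f {a1, a2} = f a1 + f a2" using assms(4) by simp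
  have s2: "sum f {b1, b2} = f b1 + f b2" using assms(7) by simp
  show ?thesis using e1 e2 s1 s2 by linarith
qed

lemma sum_swap1:
  fixes f :: "letter \<Rightarrow> nat"
  assumes "finite C" "a \<in> C" "b \<notin> C"
  shows "sum f (C - {a} \<union> {b}) + f a = sum f C + f b"
proof -
  let ?D = "C - {a}"
  have fD: "finite ?D" using assms(1) by blast
  have e1: "sum f C = f a + sum f ?D" using sum.remove[OF assms(1,2)] .
  have b: "b \<notin> ?D" using assms(3) by blast
  have "sum f (insert b ?D) = f b + sum f ?D" using sum.insert[OF fD b] .
  then have e2: "sum f (?D \<union> {b}) = f b + sum f ?D" by simp
  show ?thesis using e1 e2 by linarith
qed

lemma eS_rsum:
  assumes sp: "is_spin n C" and e: "eS n i C = Some C'" and i: "1 \<le> i" "i \<le> n"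
  shows "sum (rank n) C' < sum (rank n) C"
proof (cases "i = n")
  case True
  then have P: "Neg n \<in> C" and C': "C' = C - {Neg n} \<union> {Pos n}" using e by (auto simp: eS_def split: if_splits)
  have N: "Pos n \<notin> C" using P spin_PN[OF sp, of n] i by auto
  show ?thesis using sum_swap1[OF spin_finite[OF sp] P N, of "rank n"] C' by simp
next
  case False
  then have P: "Pos (i+1) \<in> C" "Neg i \<in> C" and C': "C' = C - {Pos (i+1), Neg i} \<union> {Pos i, Neg (i+1)}"
    using e i by (auto simp: eS_def split: if_splits)
  have N: "Pos i \<notin> C" "Neg (i+1) \<notin> C" using P spin_PN[OF sp, of i] spin_PN[OF sp, of "i+1"] i False by auto
  have "sum (rank n) C' + rank n (Pos (i+1)) + rank n (Neg i) = sum (rank n) C + rank n (Pos i) + rank n (Neg (i+1))"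
    unfolding C' by (rule sum_swap2) (use spin_finite[OF sp] P N in auto)
  then show ?thesis using i False by simp
qed

lemma eW_mu:
  assumes "w \<in> FullSV n" "eW n i w = Some w'" "1 \<le> i" "i \<le> n"
  shows "muSV n w' < muSV n w"
proof -
  obtain C x where wd: "w = [S C, L x]" "is_spin n C" "valid_letter n x" using assms(1) by (auto simp: FullSV_def)
  have "eW n i [S C, L x] = Some w'" using assms(2) wd(1) by simp
  from eW_SV_shape[OF this] show ?thesis
  proof
    assume "phiS n i C < epsL n i x \<and> (\<exists>x'. eL n i x = Some x' \<and> w' = [S C, L x'])"
    then obtain x' where "eL n i x = Some x'" "w' = [S C, L x']" by blast
    then show ?thesis using eL_rank[of n i x x'] assms wd by auto
  next
    assume "\<not> phiS n i C < epsL n i x \<and> (\<exists>C'. eS n i C = Some C' \<and> w' = [S C', L x])"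
    then obtain C' where "eS n i C = Some C'" "w' = [S C', L x]" by blast
    then show ?thesis using eS_rsum[OF wd(2)] assms wd by auto
  qed
qed

lemma closedX_e: "closedX n X \<Longrightarrow> w \<in> X \<Longrightarrow> i \<in> {1..n} \<Longrightarrow> eW n i w = Some w' \<Longrightarrow> w' \<in> X"
  unfolding closedX_def by blast

lemma closedX_f: "closedX n X \<Longrightarrow> w \<in> X \<Longrightarrow> i \<in> {1..n} \<Longrightarrow> fW n i w = Some w' \<Longrightarrow> w' \<in> X"
  unfolding closedX_def by blast

lemma reach_SV:
  assumes n: "n \<ge> 2"
  shows "w \<in> FullSV n \<Longrightarrow> w \<in> component n [S (Cn n), L Zero] \<or> w \<in> component n [S (Cn n), L (Pos 1)]"
proof (induction "muSV n w" arbitrary: w rule: less_induct)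
  case less
  show ?case
  proof (cases "\<forall>i\<in>{1..n}. eW n i w = None")
    case True
    obtain C x where wd: "w = [S C, L x]" "is_spin n C" "valid_letter n x" using less.prems by (auto simp: FullSV_def)
    have "C = Cn n \<and> (x = Zero \<or> x = Pos 1)" using hw_SV[OF n wd(2,3)] True wd(1) by simp
    then show ?thesis using wd(1) comp_self[of "[S (Cn n), L Zero]" n] comp_self[of "[S (Cn n), L (Pos 1)]" n] by auto
  next
    case False
    then obtain i w' where i: "i \<in> {1..n}" and e: "eW n i w = Some w'" by auto
    have i1: "1 \<le> i" "i \<le> n" using i by auto
    have w'F: "w' \<in> FullSV n" by (rule closedX_e[OF FullSV_closed less.prems i e])
    have lt: "muSV n w' < muSV n w" using eW_mu[OF less.prems e i1] .
    have gw: "goodW n w" using less.prems by (auto simp: FullSV_def goodW2)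
    have f: "fW n i w' = Some w" using eW_props[OF gw e i1] by simp
    from less.hyps[OF lt w'F] show ?thesis
    proof
      assume "w' \<in> component n [S (Cn n), L Zero]"
      from comp_f[OF this i f] show ?thesis by simp
    next
      assume "w' \<in> component n [S (Cn n), L (Pos 1)]"
      from comp_f[OF this i f] show ?thesis by simp
    qed
  qed
qed

lemma fA_step:
  assumes sp: "is_spin n C" and v: "valid_letter n x" and tr: "\<forall>t\<in>C. rank n t < rank n x"
  and i: "1 \<le> i" "i \<le> n" and f: "fW n i [S C, L x] = Some w'"
  shows "\<exists>C' x'. w' = [S C', L x'] \<and> (\<forall>t\<in>C'. rank n t < rank n x')"
  using fW_SV_shape[OF f]
proof
  assume "phiS n i C > epsL n i x \<and> (\<exists>C'. fS n i C = Some C' \<and> w' = [S C', L x])"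
  then obtain C' where ph: "phiS n i C > epsL n i x" and C': "fS n i C = Some C'" "w' = [S C', L x]" by blast
  show ?thesis
  proof (cases "i = n")
    case True
    then have P: "Pos n \<in> C" and CC: "C' = C - {Pos n} \<union> {Neg n}" and ep: "epsL n n x = 0"
      using C' ph by (auto simp: fS_def phiS_def split: if_splits)
    have "rank n (Pos n) < rank n x" using tr P by blast
    then have "rank n (Neg n) < rank n x" using v ep by (cases x) (auto simp: epsL_def split: if_splits)
    then show ?thesis using CC C' tr by auto
  next
    case False
    then have P: "Pos i \<in> C" "Neg (i+1) \<in> C" and CC: "C' = C - {Pos i, Neg (i+1)} \<union> {Pos (i+1), Neg i}"
      and ep: "epsL n i x = 0"
      using C' ph i by (auto simp: fS_def phiS_def split: if_splits)
    have "rank n (Neg i) < rank n x" "rank n (Pos (i+1)) < rank n x"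
      using tr P v ep i False by (cases x; auto simp: epsL_def split: if_splits)+
    then show ?thesis using CC C' tr by auto
  qed
next
  assume "\<not> phiS n i C > epsL n i x \<and> (\<exists>x'. fL n i x = Some x' \<and> w' = [S C, L x'])"
  then obtain x' where x': "fL n i x = Some x'" "w' = [S C, L x']" by blast
  then show ?thesis using fL_rank[OF x'(1) i] tr by auto
qed

lemma fB_step:
  assumes sp: "is_spin n C" and v: "valid_letter n x" and tr: "\<exists>t\<in>C. rank n x \<le> rank n t"
  and i: "1 \<le> i" "i \<le> n" and f: "fW n i [S C, L x] = Some w'"
  shows "\<exists>C' x'. w' = [S C', L x'] \<and> (\<exists>t\<in>C'. rank n x' \<le> rank n t)"
  using fW_SV_shape[OF f]
proof
  assume "phiS n i C > epsL n i x \<and> (\<exists>C'. fS n i C = Some C' \<and> w' = [S C', L x])"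
  then obtain C' where ph: "phiS n i C > epsL n i x" and C': "fS n i C = Some C'" "w' = [S C', L x]" by blast
  obtain t where t: "t \<in> C" "rank n x \<le> rank n t" using tr by blast
  show ?thesis
  proof (cases "i = n")
    case True
    then have P: "Pos n \<in> C" and CC: "C' = C - {Pos n} \<union> {Neg n}"
      using C' ph by (auto simp: fS_def phiS_def split: if_splits)
    show ?thesis
    proof (cases "t = Pos n")
      case True
      then have "Neg n \<in> C'" "rank n x \<le> rank n (Neg n)" using CC t by auto
      then show ?thesis using C' by blast
    next
      case False
      then have "t \<in> C'" using CC t by auto
      then show ?thesis using C' t by blast
    qed
  next
    case False
    then have P: "Pos i \<in> C" "Neg (i+1) \<in> C" and CC: "C' = C - {Pos i, Neg (i+1)} \<union> {Pos (i+1), Neg i}"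
      using C' ph i by (auto simp: fS_def phiS_def split: if_splits)
    show ?thesis
    proof (cases "t = Pos i \<or> t = Neg (i+1)")
      case True
      then have "Pos (i+1) \<in> C' \<and> rank n x \<le> rank n (Pos (i+1)) \<or> Neg i \<in> C' \<and> rank n x \<le> rank n (Neg i)"
        using CC t i False by auto
      then show ?thesis using C' by blast
    next
      case False
      then have "t \<in> C'" using CC t by auto
      then show ?thesis using C' t by blast
    qed
  qed
next
  assume "\<not> phiS n i C > epsL n i x \<and> (\<exists>x'. fL n i x = Some x' \<and> w' = [S C, L x'])"
  then obtain x' where ph: "\<not> phiS n i C > epsL n i x" and x': "fL n i x = Some x'" "w' = [S C, L x']" by blast
  have rx: "rank n x' = rank n x + 1" using fL_rank[OF x'(1) i] .
  obtain t where t: "t \<in> C" "rank n x \<le> rank n t" using tr by blast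
  have tv: "valid_letter n t" "t \<noteq> Zero" using spin_mem[OF sp t(1)] by auto
  have "\<exists>t\<in>C. rank n x + 1 \<le> rank n t"
  proof (cases "i = n")
    case True
    then have xx: "x = Pos n \<or> x = Zero" using x'(1) by (auto simp: fL_def split: letter.splits if_splits)
    show ?thesis
    proof (cases "x = Pos n")
      case True
      then have "Pos n \<notin> C" using ph \<open>i = n\<close> by (auto simp: phiS_def epsL_def)
      then have "Neg n \<in> C" using spin_PN[OF sp, of n] i by auto
      then show ?thesis using True by force
    next
      case False
      then have "x = Zero" using xx by simp
      then have "rank n t \<noteq> n + 1" using tv by (cases t) auto
      then show ?thesis using t \<open>x = Zero\<close> by force
    qed
  next
    case False
    then have i2: "i < n" using i by simp
    then have xx: "x = Pos i \<or> x = Neg (i+1)" using x'(1) i by (auto simp: fL_def split: letter.splits if_splits)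
    have ph0: "\<not> (Pos i \<in> C \<and> Neg (i+1) \<in> C)" using ph i2 i xx by (auto simp: phiS_def epsL_def)
    show ?thesis
    proof (cases "x = Pos i")
      case True
      have "Pos (i+1) \<in> C \<or> Neg (i+1) \<in> C" using spin_PN[OF sp, of "i+1"] i2 by auto
      then show ?thesis using True i2 by force
    next
      case False
      then have xN: "x = Neg (i+1)" using xx by simp
      show ?thesis
      proof (cases "Neg i \<in> C")
        case True then show ?thesis using xN i2 by force
      next
        case False
        then have "Pos i \<in> C" using spin_PN[OF sp, of i] i by auto
        then have "Neg (i+1) \<notin> C" using ph0 by auto
        then have "t \<noteq> x" using t xN by auto
        then have "rank n t \<noteq> rank n x" using rank_inj[OF tv(1) v] by auto
        then show ?thesis using t by force
      qed
    qed
  qed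
  then show ?thesis using x' rx by auto
qed

lemma AB_Full: "Aset n \<subseteq> FullSV n" "Bset n \<subseteq> FullSV n"
  by (auto simp: Aset_def Bset_def FullSV_def)

lemma AB_disj: "w \<in> Aset n \<Longrightarrow> w \<in> Bset n \<Longrightarrow> False"
  by (auto simp: Aset_def Bset_def)

lemma Full_AB: "w \<in> FullSV n \<Longrightarrow> w \<in> Aset n \<or> w \<in> Bset n"
  by (auto simp: Aset_def Bset_def FullSV_def)

lemma A_f:
  assumes n: "n \<ge> 2" and w: "w \<in> Aset n" and i: "i \<in> {1..n}" and f: "fW n i w = Some w'"
  shows "w' \<in> Aset n"
proof -
  obtain C x where wd: "w = [S C, L x]" "is_spin n C" "valid_letter n x" "tri n x C"
    using w by (auto simp: Aset_def)
  have w'F: "w' \<in> FullSV n" using closedX_f[OF FullSV_closed _ i f] w AB_Full by blast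
  then obtain C' x' where w'd: "w' = [S C', L x']" "is_spin n C'" "valid_letter n x'"
    by (auto simp: FullSV_def)
  have tr: "\<forall>t\<in>C. rank n t < rank n x" using tri_iff[OF wd(2)] n wd(4) by auto
  have i1: "1 \<le> i" "i \<le> n" using i by auto
  obtain C2 x2 where c2: "w' = [S C2, L x2]" "\<forall>t\<in>C2. rank n t < rank n x2"
    using fA_step[OF wd(2,3) tr i1] f wd(1) by blast
  have "C2 = C'" "x2 = x'" using c2(1) w'd(1) by auto
  then have "tri n x' C'" using tri_iff[OF w'd(2)] n c2(2) by auto
  then show ?thesis using w'd by (auto simp: Aset_def)
qed

lemma B_f:
  assumes n: "n \<ge> 2" and w: "w \<in> Bset n" and i: "i \<in> {1..n}" and f: "fW n i w = Some w'"
  shows "w' \<in> Bset n"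
proof -
  obtain C x where wd: "w = [S C, L x]" "is_spin n C" "valid_letter n x" "\<not> tri n x C"
    using w by (auto simp: Bset_def)
  have w'F: "w' \<in> FullSV n" using closedX_f[OF FullSV_closed _ i f] w AB_Full by blast
  then obtain C' x' where w'd: "w' = [S C', L x']" "is_spin n C'" "valid_letter n x'"
    by (auto simp: FullSV_def)
  have tr: "\<exists>t\<in>C. rank n x \<le> rank n t" using tri_iff[OF wd(2)] n wd(4) by force
  have i1: "1 \<le> i" "i \<le> n" using i by auto
  obtain C2 x2 where c2: "w' = [S C2, L x2]" "\<exists>t\<in>C2. rank n x2 \<le> rank n t"
    using fB_step[OF wd(2,3) tr i1] f wd(1) by blast
  have "C2 = C'" "x2 = x'" using c2(1) w'd(1) by auto
  then have "\<not> tri n x' C'" using tri_iff[OF w'd(2)] n c2(2) by (auto simp: not_less)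
  then show ?thesis using w'd by (auto simp: Bset_def)
qed

lemma A_closed: assumes n: "n \<ge> 2" shows "closedX n (Aset n)"
  unfolding closedX_def
proof (intro ballI conjI allI impI)
  fix w i w' assume w: "w \<in> Aset n" and i: "i \<in> {1..n}"
  { assume "fW n i w = Some w'" then show "w' \<in> Aset n" using A_f[OF n w i] by simp }
  { assume e: "eW n i w = Some w'"
    have wF: "w \<in> FullSV n" using w AB_Full by blast
    have w'F: "w' \<in> FullSV n" using closedX_e[OF FullSV_closed wF i e] .
    have gw: "goodW n w" using wF by (auto simp: FullSV_def goodW2)
    have i1: "1 \<le> i" "i \<le> n" using i by auto
    have f: "fW n i w' = Some w" using eW_props[OF gw e i1] by simp
    show "w' \<in> Aset n"
    proof (rule ccontr)
      assume "w' \<notin> Aset n"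
      then have "w' \<in> Bset n" using Full_AB[OF w'F] by simp
      then have "w \<in> Bset n" using B_f[OF n _ i f] by simp
      then show False using AB_disj w by blast
    qed }
qed

lemma B_closed: assumes n: "n \<ge> 2" shows "closedX n (Bset n)"
  unfolding closedX_def
proof (intro ballI conjI allI impI)
  fix w i w' assume w: "w \<in> Bset n" and i: "i \<in> {1..n}"
  { assume "fW n i w = Some w'" then show "w' \<in> Bset n" using B_f[OF n w i] by simp }
  { assume e: "eW n i w = Some w'"
    have wF: "w \<in> FullSV n" using w AB_Full by blast
    have w'F: "w' \<in> FullSV n" using closedX_e[OF FullSV_closed wF i e] .
    have gw: "goodW n w" using wF by (auto simp: FullSV_def goodW2)
    have i1: "1 \<le> i" "i \<le> n" using i by auto
    have f: "fW n i w' = Some w" using eW_props[OF gw e i1] by simp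
    show "w' \<in> Bset n"
    proof (rule ccontr)
      assume "w' \<notin> Bset n"
      then have "w' \<in> Aset n" using Full_AB[OF w'F] by simp
      then have "w \<in> Aset n" using A_f[OF n _ i f] by simp
      then show False using AB_disj w by blast
    qed }
qed

lemma hw0_A: "n \<ge> 2 \<Longrightarrow> [S (Cn n), L Zero] \<in> Aset n"
proof -
  assume n: "n \<ge> 2"
  have "tri n Zero (Cn n)" using tri_iff[OF Cn_spin, of n Zero] n by (auto simp: Cn_def)
  then show ?thesis using Cn_spin[of n] by (auto simp: Aset_def)
qed

lemma hw1_B: "n \<ge> 2 \<Longrightarrow> [S (Cn n), L (Pos 1)] \<in> Bset n"
proof -
  assume n: "n \<ge> 2"
  have "Pos 1 \<in> Cn n" using n by (auto simp: Cn_def)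
  then have "\<not> tri n (Pos 1) (Cn n)" using tri_iff[OF Cn_spin, of n "Pos 1"] n by force
  then show ?thesis using Cn_spin[of n] n by (auto simp: Bset_def)
qed

lemma comp_A: assumes n: "n \<ge> 2" shows "component n [S (Cn n), L Zero] = Aset n"
proof
  show "component n [S (Cn n), L Zero] \<subseteq> Aset n" using comp_sub[OF hw0_A[OF n] A_closed[OF n]] .
  have cB: "component n [S (Cn n), L (Pos 1)] \<subseteq> Bset n" using comp_sub[OF hw1_B[OF n] B_closed[OF n]] .
  show "Aset n \<subseteq> component n [S (Cn n), L Zero]"
  proof
    fix w assume w: "w \<in> Aset n"
    then have "w \<in> FullSV n" using AB_Full by blast
    from reach_SV[OF n this] show "w \<in> component n [S (Cn n), L Zero]"
      using cB w AB_disj by blast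
  qed
qed

lemma comp_B: assumes n: "n \<ge> 2" shows "component n [S (Cn n), L (Pos 1)] = Bset n"
proof
  show "component n [S (Cn n), L (Pos 1)] \<subseteq> Bset n" using comp_sub[OF hw1_B[OF n] B_closed[OF n]] .
  have cA: "component n [S (Cn n), L Zero] \<subseteq> Aset n" using comp_sub[OF hw0_A[OF n] A_closed[OF n]] .
  show "Bset n \<subseteq> component n [S (Cn n), L (Pos 1)]"
  proof
    fix w assume w: "w \<in> Bset n"
    then have "w \<in> FullSV n" using AB_Full by blast
    from reach_SV[OF n this] show "w \<in> component n [S (Cn n), L (Pos 1)]"
      using cA w AB_disj by blast
  qed
qed

lemma uhw_A: assumes n: "n \<ge> 2"
  shows "\<forall>w\<in>Aset n. (\<forall>i\<in>{1..n}. eW n i w = None) \<longrightarrow> w = [S (Cn n), L Zero]"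
proof (intro ballI impI)
  fix w assume w: "w \<in> Aset n" and hw: "\<forall>i\<in>{1..n}. eW n i w = None"
  obtain C x where wd: "w = [S C, L x]" "is_spin n C" "valid_letter n x" "tri n x C"
    using w by (auto simp: Aset_def)
  have c: "C = Cn n \<and> (x = Zero \<or> x = Pos 1)" using hw_SV[OF n wd(2,3)] hw wd(1) by simp
  have "x \<noteq> Pos 1"
  proof
    assume "x = Pos 1"
    then have "[S C, L x] \<in> Bset n" using c hw1_B[OF n] by simp
    then show False using AB_disj w wd(1) by blast
  qed
  then show "w = [S (Cn n), L Zero]" using c wd(1) by simp
qed

lemma uhw_B: assumes n: "n \<ge> 2"
  shows "\<forall>w\<in>Bset n. (\<forall>i\<in>{1..n}. eW n i w = None) \<longrightarrow> w = [S (Cn n), L (Pos 1)]"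
proof (intro ballI impI)
  fix w assume w: "w \<in> Bset n" and hw: "\<forall>i\<in>{1..n}. eW n i w = None"
  obtain C x where wd: "w = [S C, L x]" "is_spin n C" "valid_letter n x" "\<not> tri n x C"
    using w by (auto simp: Bset_def)
  have c: "C = Cn n \<and> (x = Zero \<or> x = Pos 1)" using hw_SV[OF n wd(2,3)] hw wd(1) by simp
  have "x \<noteq> Zero"
  proof
    assume "x = Zero"
    then have "[S C, L x] \<in> Aset n" using c hw0_A[OF n] by simp
    then show False using AB_disj w wd(1) by blast
  qed
  then show "w = [S (Cn n), L (Pos 1)]" using c wd(1) by simp
qed

definition spin_of_wt :: "nat \<Rightarrow> (nat \<Rightarrow> real) \<Rightarrow> letter set" where
  "spin_of_wt n W = {Pos j | j. 1 \<le> j \<and> j \<le> n \<and> W j > 0} \<union> {Neg j | j. 1 \<le> j \<and> j \<le> n \<and> W j < 0}"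

definition spinlike :: "nat \<Rightarrow> (nat \<Rightarrow> real) \<Rightarrow> bool" where
  "spinlike n W \<longleftrightarrow> (\<forall>j. (1 \<le> j \<and> j \<le> n \<longrightarrow> W j = 1/2 \<or> W j = -1/2) \<and> (\<not> (1 \<le> j \<and> j \<le> n) \<longrightarrow> W j = 0))"

lemma spinlike_wtS:
  assumes sp: "is_spin n C" shows "spinlike n (wtS C)"
  unfolding spinlike_def
proof (intro allI conjI impI)
  fix j assume j: "1 \<le> j \<and> j \<le> n"
  have "(Neg j \<in> C) = (Pos j \<notin> C)" using spin_PN[OF sp] j by blast
  then show "wtS C j = 1/2 \<or> wtS C j = -1/2" by (simp add: wtS_def)
next
  fix j assume j: "\<not> (1 \<le> j \<and> j \<le> n)"
  have "Pos j \<notin> C" "Neg j \<notin> C" using spin_Pos[OF sp, of j] spin_Neg[OF sp, of j] j by blast+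
  then show "wtS C j = 0" by (simp add: wtS_def)
qed

lemma spin_of_wt_mem:
  "Pos j \<in> spin_of_wt n W \<longleftrightarrow> 1 \<le> j \<and> j \<le> n \<and> W j > 0"
  "Neg j \<in> spin_of_wt n W \<longleftrightarrow> 1 \<le> j \<and> j \<le> n \<and> W j < 0"
  "Zero \<notin> spin_of_wt n W"
  by (auto simp: spin_of_wt_def)

lemma spin_of_wt_spin:
  assumes sl: "spinlike n W"
  shows "is_spin n (spin_of_wt n W) \<and> wtS (spin_of_wt n W) = W"
proof
  show "is_spin n (spin_of_wt n W)"
    unfolding spin_iff
  proof (rule conjI)
    show "\<forall>t\<in>spin_of_wt n W. t \<noteq> Zero \<and> valid_letter n t"
    proof
      fix t assume "t \<in> spin_of_wt n W"
      then show "t \<noteq> Zero \<and> valid_letter n t" by (cases t) (auto simp: spin_of_wt_mem)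
    qed
    show "\<forall>i. 1 \<le> i \<and> i \<le> n \<longrightarrow> (Pos i \<in> spin_of_wt n W) = (Neg i \<notin> spin_of_wt n W)"
    proof (intro allI impI)
      fix i assume i: "1 \<le> i \<and> i \<le> n"
      then have "W i = 1/2 \<or> W i = -1/2" using sl unfolding spinlike_def by blast
      then show "(Pos i \<in> spin_of_wt n W) = (Neg i \<notin> spin_of_wt n W)" using i by (auto simp: spin_of_wt_mem)
    qed
  qed
  show "wtS (spin_of_wt n W) = W"
  proof
    fix j
    show "wtS (spin_of_wt n W) j = W j"
    proof (cases "1 \<le> j \<and> j \<le> n")
      case True
      then have "W j = 1/2 \<or> W j = -1/2" using sl unfolding spinlike_def by blast
      then show ?thesis using True by (auto simp: wtS_def spin_of_wt_mem)
    next
      case False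
      then have "W j = 0" using sl unfolding spinlike_def by blast
      then show ?thesis using False by (auto simp: wtS_def spin_of_wt_mem)
    qed
  qed
qed

lemma wtS_pos: "(wtS C j > 0) = (Pos j \<in> C)"
  by (simp add: wtS_def)

lemma wtS_neg: "is_spin n C \<Longrightarrow> (wtS C j < 0) = (Neg j \<in> C)"
proof -
  assume sp: "is_spin n C"
  show ?thesis
  proof (cases "Neg j \<in> C")
    case True
    then have "1 \<le> j" "j \<le> n" using spin_Neg[OF sp] by auto
    then have "Pos j \<notin> C" using spin_PN[OF sp] True by blast
    then show ?thesis using True by (simp add: wtS_def)
  next
    case False then show ?thesis by (simp add: wtS_def)
  qed
qed

lemma spin_of_wt_wtS:
  assumes sp: "is_spin n C" shows "spin_of_wt n (wtS C) = C"
proof (rule set_eqI)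
  fix t
  show "(t \<in> spin_of_wt n (wtS C)) = (t \<in> C)"
  proof (cases t)
    case (Pos j)
    have "Pos j \<in> C \<Longrightarrow> 1 \<le> j \<and> j \<le> n" using spin_Pos[OF sp] by blast
    then show ?thesis using Pos by (auto simp only: spin_of_wt_mem wtS_pos)
  next
    case Zero then show ?thesis using spin_Zero[OF sp] spin_of_wt_mem(3) by simp
  next
    case (Neg j)
    have "Neg j \<in> C \<Longrightarrow> 1 \<le> j \<and> j \<le> n" using spin_Neg[OF sp] by blast
    then show ?thesis using Neg by (auto simp only: spin_of_wt_mem wtS_neg[OF sp])
  qed
qed

lemma spin_wt_eq: 
  assumes a1: "is_spin n C1" and a2: "is_spin n C2" and eq: "wtS C1 = wtS C2" shows "C1 = C2"
proof -
  have "C1 = spin_of_wt n (wtS C1)" using spin_of_wt_wtS[OF a1] by (rule sym)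
  also have "\<dots> = spin_of_wt n (wtS C2)" using eq by (rule arg_cong)
  also have "\<dots> = C2" by (rule spin_of_wt_wtS[OF a2])
  finally show ?thesis .
qed

definition FullS :: "nat \<Rightarrow> word set" where
  "FullS n = {[S C] | C. is_spin n C}"

lemma FullS_closed: "closedX n (FullS n)"
  unfolding closedX_def
proof (intro ballI conjI allI impI)
  fix w i w' assume w: "w \<in> FullS n" and i: "i \<in> {1..n}"
  then obtain C where wd: "w = [S C]" "is_spin n C" by (auto simp: FullS_def)
  { assume "fW n i w = Some w'"
    then have "map_option (\<lambda>u'. [u']) (fG n i (S C)) = Some w'" using wd fW1 by metis
    then obtain C' where "fS n i C = Some C'" "w' = [S C']" by auto
    then show "w' \<in> FullS n" using fS_spin[OF wd(2)] by (auto simp: FullS_def) }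
  { assume "eW n i w = Some w'"
    then have "map_option (\<lambda>u'. [u']) (eG n i (S C)) = Some w'" using wd eW1 by metis
    then obtain C' where "eS n i C = Some C'" "w' = [S C']" by auto
    then show "w' \<in> FullS n" using eS_spin[OF wd(2)] by (auto simp: FullS_def) }
qed

lemma compS_sub: "component n [S (Cn n)] \<subseteq> FullS n"
  by (rule comp_sub[OF _ FullS_closed]) (auto simp: FullS_def Cn_spin)

lemma alpha_ii: "alpha n i i = 1"
  by (simp add: alpha_def)

lemma minuscule:
  assumes cl: "closedX n X" and sl: "\<forall>w\<in>X. spinlike n (wtW w) \<and> goodW n w"
  and w: "w \<in> X" and i: "i \<in> {1..n}"
  shows "phiW n i w = 0 \<or> epsW n i w = 0"
proof (rule ccontr)
  assume "\<not> ?thesis"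
  then obtain w1 w0 where f: "fW n i w = Some w1" and e: "eW n i w = Some w0"
    using fW_pos[of n i w] eW_pos[of n i w] by auto
  have i1: "1 \<le> i" "i \<le> n" using i by auto
  have gw: "goodW n w" using sl w by auto
  have w1: "w1 \<in> X" using closedX_f[OF cl w i f] .
  have w0: "w0 \<in> X" using closedX_e[OF cl w i e] .
  have a: "wtW w1 i = wtW w i - 1" using fW_props[OF gw f i1] alpha_ii by simp
  have b: "wtW w0 i = wtW w i + 1" using eW_props[OF gw e i1] alpha_ii by simp
  have "wtW w1 i = 1/2 \<or> wtW w1 i = -1/2" "wtW w0 i = 1/2 \<or> wtW w0 i = -1/2"
    using sl w1 w0 i1 unfolding spinlike_def by blast+
  then show False using a b by auto
qed

lemma phi_pos_hh:
  assumes "phiW n i w = 0 \<or> epsW n i w = 0" "goodW n w" "1 \<le> i" "i \<le> n"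
  shows "(phiW n i w > 0) = (hh n i (wtW w) > 0)"
  using W_h[OF assms(2-4)] assms(1) by auto

lemma A_spinlike:
  assumes n: "n \<ge> 2" and w: "w \<in> Aset n"
  shows "spinlike n (wtW w)"
proof -
  obtain C x where wd: "w = [S C, L x]" "is_spin n C" "valid_letter n x" "tri n x C"
    using w by (auto simp: Aset_def)
  have tr: "\<forall>t\<in>C. rank n t < rank n x" using tri_iff[OF wd(2)] n wd(4) by auto
  have sl: "spinlike n (wtS C)" using spinlike_wtS[OF wd(2)] .
  have e: "wtW w = (\<lambda>j. wtS C j + wtL x j)" using wd(1) by (auto simp: fun_eq_iff)
  show ?thesis
  proof (cases x)
    case (Pos j)
    have "Pos j \<in> C \<or> Neg j \<in> C" using spin_PN[OF wd(2), of j] Pos wd(3) by auto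
    then show ?thesis using tr Pos wd(3) by force
  next
    case Zero then show ?thesis using e sl by simp
  next
    case (Neg j)
    have j: "1 \<le> j" "j \<le> n" using Neg wd(3) by auto
    have "Neg j \<notin> C" using tr Neg by force
    then have "Pos j \<in> C" using spin_PN[OF wd(2) j] by auto
    then show ?thesis using e sl Neg j unfolding spinlike_def wtS_def by auto
  qed
qed

definition PsiA :: "nat \<Rightarrow> word \<Rightarrow> word" where
  "PsiA n w = [S (spin_of_wt n (wtW w))]"

lemma wtW_S1: "wtW [S C] = wtS C"
  by (rule ext) simp

lemma FullS_props: "y \<in> FullS n \<Longrightarrow> spinlike n (wtW y) \<and> goodW n y"
  by (auto simp: FullS_def wtW_S1 goodW1 spinlike_wtS)

lemma A_props: "n \<ge> 2 \<Longrightarrow> w \<in> Aset n \<Longrightarrow> spinlike n (wtW w) \<and> goodW n w"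
  using A_spinlike[of n w] by (auto simp: Aset_def goodW2)

lemma PsiA_props:
  assumes n: "n \<ge> 2" and w: "w \<in> Aset n"
  shows "PsiA n w \<in> FullS n \<and> wtW (PsiA n w) = wtW w \<and> goodW n (PsiA n w)"
proof -
  have sl: "spinlike n (wtW w)" using A_props[OF n w] by simp
  note s = spin_of_wt_spin[OF sl]
  show ?thesis using s unfolding PsiA_def by (auto simp: FullS_def wtW_S1 goodW1)
qed

lemma fcomm_A:
  assumes n: "n \<ge> 2" and w: "w \<in> Aset n" and i: "i \<in> {1..n}"
  shows "fW n i (PsiA n w) = map_option (PsiA n) (fW n i w)"
proof -
  have i1: "1 \<le> i" "i \<le> n" using i by auto
  have gw: "goodW n w" using A_props[OF n w] by simp
  note P = PsiA_props[OF n w]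
  have minA: "phiW n i w = 0 \<or> epsW n i w = 0"
    by (rule minuscule[OF A_closed[OF n] _ w i]) (use A_props[OF n] in blast)
  have minS: "phiW n i (PsiA n w) = 0 \<or> epsW n i (PsiA n w) = 0"
    by (rule minuscule[OF FullS_closed _ _ i]) (use FullS_props P in blast)+
  have eq: "(phiW n i w > 0) = (phiW n i (PsiA n w) > 0)"
    using phi_pos_hh[OF minA gw i1] phi_pos_hh[OF minS _ i1] P by simp
  show ?thesis
  proof (cases "fW n i w")
    case None
    then have "phiW n i w = 0" using fW_pos[of n i w] by simp
    then have "phiW n i (PsiA n w) = 0" using eq by simp
    then have "fW n i (PsiA n w) = None" using fW_pos[of n i "PsiA n w"] by simp
    then show ?thesis using None by simp
  next
    case (Some w1)
    then have "phiW n i w > 0" using fW_pos[of n i w] by simp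
    then have "phiW n i (PsiA n w) > 0" using eq by simp
    then obtain y where y: "fW n i (PsiA n w) = Some y" using fW_pos[of n i "PsiA n w"] by auto
    have yF: "y \<in> FullS n" using closedX_f[OF FullS_closed _ i y] P by simp
    then obtain C1 where C1: "y = [S C1]" "is_spin n C1" by (auto simp: FullS_def)
    have g2: "goodW n (PsiA n w)" using P by simp
    have wy: "\<forall>j. wtW y j = wtW (PsiA n w) j - alpha n i j" using fW_props[OF g2 y i1] by simp
    have ww: "\<forall>j. wtW w1 j = wtW w j - alpha n i j" using fW_props[OF gw Some i1] by simp
    have "wtW w1 = wtW y" using wy ww P by (auto simp: fun_eq_iff)
    then have "wtW w1 = wtS C1" using C1 wtW_S1 by simp
    then have "PsiA n w1 = y" using C1 spin_of_wt_wtS[OF C1(2)] by (simp add: PsiA_def)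
    then show ?thesis using y Some by simp
  qed
qed

lemma PsiA_hw0: "PsiA n [S (Cn n), L Zero] = [S (Cn n)]"
proof -
  have "wtW [S (Cn n), L Zero] = wtS (Cn n)" by (rule ext) simp
  then show ?thesis using spin_of_wt_wtS[OF Cn_spin] by (simp add: PsiA_def)
qed

lemma iso_A:
  assumes n: "n \<ge> 2"
  shows "crystal_iso n (component n [S (Cn n), L Zero]) (component n [S (Cn n)]) (PsiA n)"
proof -
  have X: "component n [S (Cn n), L Zero] = component n [S (Cn n), L Zero]" "goodW n [S (Cn n), L Zero]"
    using Cn_spin by (auto simp: goodW2)
  note cA = comp_A[OF n]
  have wt: "\<forall>w\<in>component n [S (Cn n), L Zero]. wtW (PsiA n w) = wtW w \<and> goodW n (PsiA n w)"
    using PsiA_props[OF n] cA by blast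
  have fc: "\<forall>w\<in>component n [S (Cn n), L Zero]. \<forall>i\<in>{1..n}. fW n i (PsiA n w) = map_option (PsiA n) (fW n i w)"
    using fcomm_A[OF n] cA by blast
  have u: "\<forall>w\<in>component n [S (Cn n), L Zero]. (\<forall>i\<in>{1..n}. eW n i w = None) \<longrightarrow> w = [S (Cn n), L Zero]"
    using uhw_A[OF n] cA by blast
  from iso_from_f[OF X wt fc hw0_hw[OF n] u] show ?thesis using PsiA_hw0 by simp
qed

lemma part4:
  assumes n: "n \<ge> 2"
  and I: "crystal_iso n (component n [S (Cn n), L Zero]) (component n [S (Cn n)]) \<Psi>"
  and c: "is_spin n C \<and> valid_letter n x \<and> tri n x C"
  shows "\<exists>C'. is_spin n C' \<and> (\<forall>j. wtS C' j = wtS C j + wtL x j) \<and> \<Psi> [S C, L x] = [S C']"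
proof -
  have w: "[S C, L x] \<in> component n [S (Cn n), L Zero]" using c comp_A[OF n] by (auto simp: Aset_def)
  have b: "bij_betw \<Psi> (component n [S (Cn n), L Zero]) (component n [S (Cn n)])"
    and wt: "wtW (\<Psi> [S C, L x]) = wtW [S C, L x]" using I w by (auto simp: crystal_iso_def)
  have "\<Psi> [S C, L x] \<in> component n [S (Cn n)]" using bij_betwE[OF b] w by blast
  then have "\<Psi> [S C, L x] \<in> FullS n" using compS_sub by blast
  then obtain C' where C': "\<Psi> [S C, L x] = [S C']" "is_spin n C'" by (auto simp: FullS_def)
  have "\<forall>j. wtS C' j = wtS C j + wtL x j"
  proof
    fix j
    have "wtW [S C'] j = wtW [S C, L x] j" using wt C' by simp
    then show "wtS C' j = wtS C j + wtL x j" by simp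
  qed
  then show ?thesis using C' by blast
qed

definition Tset :: "nat \<Rightarrow> letter set \<Rightarrow> letter \<Rightarrow> letter set" where
  "Tset n C x = (if rank n Zero \<le> rank n x then {t \<in> C. rank n x \<le> rank n t}
                 else {t \<in> C. rank n x \<le> rank n t} \<union> {Zero})"

definition xp :: "nat \<Rightarrow> letter set \<Rightarrow> letter \<Rightarrow> letter" where
  "xp n C x = (THE t. t \<in> Tset n C x \<and> (\<forall>s\<in>Tset n C x. rank n t \<le> rank n s))"

lemma Tset_mem: "s \<in> Tset n C x \<longleftrightarrow> (s \<in> C \<and> rank n x \<le> rank n s) \<or> (s = Zero \<and> rank n x \<le> n)"
  by (auto simp: Tset_def)

lemma Tset_valid: "is_spin n C \<Longrightarrow> s \<in> Tset n C x \<Longrightarrow> valid_letter n s"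
  using spin_mem[of n C s] by (auto simp: Tset_mem)

lemma xp_eq:
  assumes sp: "is_spin n C" and c: "c \<in> Tset n C x" and m: "\<forall>s\<in>Tset n C x. rank n c \<le> rank n s"
  shows "xp n C x = c"
  unfolding xp_def
proof (rule the_equality)
  show "c \<in> Tset n C x \<and> (\<forall>s\<in>Tset n C x. rank n c \<le> rank n s)" using c m by simp
  fix t assume t: "t \<in> Tset n C x \<and> (\<forall>s\<in>Tset n C x. rank n t \<le> rank n s)"
  then have "rank n t = rank n c" using c m by (meson le_antisym)
  then show "t = c" using rank_inj Tset_valid[OF sp] t c by blast
qed

lemma xp_spec:
  assumes sp: "is_spin n C" and ex: "\<exists>t\<in>C. rank n x \<le> rank n t"
  shows "xp n C x \<in> Tset n C x \<and> (\<forall>s\<in>Tset n C x. rank n (xp n C x) \<le> rank n s)"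
proof -
  have fin: "finite (Tset n C x)" using spin_finite[OF sp] by (simp add: Tset_def)
  have ne: "Tset n C x \<noteq> {}" using ex by (auto simp: Tset_mem)
  have fi: "finite (rank n ` Tset n C x)" using fin by simp
  have ne2: "rank n ` Tset n C x \<noteq> {}" using ne by simp
  obtain c where c: "c \<in> Tset n C x" "rank n c = Min (rank n ` Tset n C x)"
    using Min_in[OF fi ne2] by auto
  have m: "\<forall>s\<in>Tset n C x. rank n c \<le> rank n s" using c(2) Min_le[OF fi] by auto
  show ?thesis using xp_eq[OF sp c(1) m] c(1) m by simp
qed

lemma xp_facts:
  assumes sp: "is_spin n C" and v: "valid_letter n x" and ex: "\<exists>t\<in>C. rank n x \<le> rank n t"
  defines "y \<equiv> xp n C x"
  shows "(y \<in> C \<or> (y = Zero \<and> rank n x \<le> n)) \<and> rank n x \<le> rank n y \<and>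
         (\<forall>s\<in>C. rank n x \<le> rank n s \<longrightarrow> rank n y \<le> rank n s) \<and>
         (rank n x \<le> n \<longrightarrow> rank n y \<le> n + 1) \<and> (x \<in> C \<longrightarrow> y = x) \<and> valid_letter n y"
proof -
  note S = xp_spec[OF sp ex]
  have a: "y \<in> C \<and> rank n x \<le> rank n y \<or> (y = Zero \<and> rank n x \<le> n)" using S unfolding y_def Tset_mem by blast
  have b: "\<forall>s\<in>C. rank n x \<le> rank n s \<longrightarrow> rank n y \<le> rank n s"
  proof (intro ballI impI)
    fix s assume "s \<in> C" "rank n x \<le> rank n s"
    then have "s \<in> Tset n C x" by (simp add: Tset_mem)
    then show "rank n y \<le> rank n s" using S unfolding y_def by blast
  qed
  have c: "rank n x \<le> n \<longrightarrow> rank n y \<le> n + 1"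
  proof
    assume "rank n x \<le> n"
    then have "Zero \<in> Tset n C x" by (simp add: Tset_mem)
    then show "rank n y \<le> n + 1" using S unfolding y_def by fastforce
  qed
  have d: "x \<in> C \<longrightarrow> y = x"
  proof
    assume xC: "x \<in> C"
    have "x \<in> Tset n C x" using xC by (simp add: Tset_mem)
    then have "rank n y \<le> rank n x" using S unfolding y_def by blast
    moreover have "rank n x \<le> rank n y" using a by auto
    ultimately show "y = x" using rank_inj[OF Tset_valid[OF sp] v] S unfolding y_def by auto
  qed
  have e: "valid_letter n y" using Tset_valid[OF sp] S unfolding y_def by blast
  show ?thesis using a b c d e by auto
qed

fun bar :: "letter \<Rightarrow> letter" where
  "bar (Pos j) = Neg j" | "bar Zero = Zero" | "bar (Neg j) = Pos j"

definition Dset :: "letter set \<Rightarrow> letter \<Rightarrow> letter \<Rightarrow> letter set" where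
  "Dset C x y = (if y = x then C else C - {bar x, y} \<union> ({x, bar y} - {Zero}))"

definition Cp :: "nat \<Rightarrow> letter set \<Rightarrow> letter \<Rightarrow> letter set" where
  "Cp n C x = Dset C x (xp n C x)"

fun PsiB :: "nat \<Rightarrow> word \<Rightarrow> word" where
  "PsiB n [S C, L x] = [L (xp n C x), S (Cp n C x)]"
| "PsiB n w = w"

lemma fW_VS: "fW n i [L y, S D] = (if phiL n i y > epsS n i D then map_option (\<lambda>y'. [L y', S D]) (fL n i y)
                            else map_option (\<lambda>D'. [L y, S D']) (fS n i D))"
  unfolding fW2 phiG_L epsG_S by (simp add: option.map_comp comp_def)

lemma fW_SV: "fW n i [S C, L x] = (if phiS n i C > epsL n i x then map_option (\<lambda>C'. [S C', L x]) (fS n i C)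
                            else map_option (\<lambda>x'. [S C, L x']) (fL n i x))"
  unfolding fW2 phiG_S epsG_L by (simp add: option.map_comp comp_def)

lemma Dset_props:
  assumes sp: "is_spin n C" and v: "valid_letter n x" and xC: "x \<notin> C"
  and yC: "y \<in> C \<or> y = Zero" and yx: "y \<noteq> x"
  and c1: "\<forall>j. x = Pos j \<longrightarrow> y \<noteq> Neg j" and c2: "\<forall>j. x = Neg j \<longrightarrow> y \<noteq> Pos j"
  shows "is_spin n (Dset C x y) \<and> (\<forall>m. wtS (Dset C x y) m = wtS C m + wtL x m - wtL y m)"
proof -
  have D: "Dset C x y = C - {bar x, y} \<union> ({x, bar y} - {Zero})" using yx by (simp add: Dset_def)
  have PN: "\<And>j. 1 \<le> j \<Longrightarrow> j \<le> n \<Longrightarrow> (Neg j \<in> C) = (Pos j \<notin> C)" using spin_PN[OF sp] by blast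
  have vy: "valid_letter n y" using yC spin_mem[OF sp] by auto
  have sp2: "is_spin n (Dset C x y)"
    unfolding spin_iff
  proof (rule conjI)
    show "\<forall>t\<in>Dset C x y. t \<noteq> Zero \<and> valid_letter n t"
      unfolding D using spin_mem[OF sp] v vy by (cases y) auto
    show "\<forall>i. 1 \<le> i \<and> i \<le> n \<longrightarrow> (Pos i \<in> Dset C x y) = (Neg i \<notin> Dset C x y)"
    proof (intro allI impI)
      fix i assume i: "1 \<le> i \<and> i \<le> n"
      have pi: "(Neg i \<in> C) = (Pos i \<notin> C)" using PN i by auto
      show "(Pos i \<in> Dset C x y) = (Neg i \<notin> Dset C x y)"
        unfolding D using pi xC yC yx c1 c2 PN v
        by (cases x; cases y) auto
    qed
  qed
  have wt: "\<forall>m. wtS (Dset C x y) m = wtS C m + wtL x m - wtL y m"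
  proof
    fix m
    show "wtS (Dset C x y) m = wtS C m + wtL x m - wtL y m"
    proof (cases "1 \<le> m \<and> m \<le> n")
      case True
      have pi: "(Neg m \<in> C) = (Pos m \<notin> C)" using PN True by auto
      show ?thesis unfolding D wtS_def using pi xC yC yx c1 c2 PN v
        by (cases x; cases y) auto
    next
      case False
      have "Pos m \<notin> C" "Neg m \<notin> C" using spin_Pos[OF sp] spin_Neg[OF sp] False by blast+
      then show ?thesis unfolding D wtS_def using xC yC yx c1 c2 v vy False
        by (cases x; cases y) auto
    qed
  qed
  show ?thesis using sp2 wt by simp
qed

lemma Cp_props:
  assumes sp: "is_spin n C" and v: "valid_letter n x" and ex: "\<exists>t\<in>C. rank n x \<le> rank n t"
  shows "is_spin n (Cp n C x) \<and> (\<forall>m. wtS (Cp n C x) m = wtS C m + wtL x m - wtL (xp n C x) m)"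
proof -
  define y where "y = xp n C x"
  note F = xp_facts[OF sp v ex, folded y_def]
  show ?thesis
  proof (cases "x \<in> C")
    case True
    then have "y = x" using F by simp
    then show ?thesis using sp by (simp add: Cp_def Dset_def y_def[symmetric])
  next
    case False
    have yC: "y \<in> C \<or> y = Zero" using F by blast
    have yx: "y \<noteq> x" using F False by auto
    have c1: "\<forall>j. x = Pos j \<longrightarrow> y \<noteq> Neg j"
    proof (intro allI impI)
      fix j assume "x = Pos j"
      then have "rank n y \<le> n + 1" using F v by auto
      then show "y \<noteq> Neg j" using v \<open>x = Pos j\<close> by auto
    qed
    have c2: "\<forall>j. x = Neg j \<longrightarrow> y \<noteq> Pos j"
    proof (intro allI impI)
      fix j assume "x = Neg j"
      then have "rank n y \<ge> 2 * n + 2 - j" using F by auto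
      then show "y \<noteq> Pos j" using v \<open>x = Neg j\<close> by auto
    qed
    show ?thesis using Dset_props[OF sp v False yC yx c1 c2] by (simp add: Cp_def y_def)
  qed
qed

lemma Bset_ex: "n \<ge> 2 \<Longrightarrow> is_spin n C \<Longrightarrow> \<not> tri n x C \<Longrightarrow> \<exists>t\<in>C. rank n x \<le> rank n t"
  using tri_iff[of n C x] by (auto simp: not_less)

lemma PsiB_props:
  assumes n: "n \<ge> 2" and w: "w \<in> Bset n"
  shows "goodW n (PsiB n w) \<and> wtW (PsiB n w) = wtW w"
proof -
  obtain C x where wd: "w = [S C, L x]" "is_spin n C" "valid_letter n x" "\<not> tri n x C"
    using w by (auto simp: Bset_def)
  have ex: "\<exists>t\<in>C. rank n x \<le> rank n t" using Bset_ex[OF n wd(2,4)] .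
  note F = xp_facts[OF wd(2,3) ex]
  note P = Cp_props[OF wd(2,3) ex]
  show ?thesis using wd F P by (auto simp: goodW2' fun_eq_iff)
qed

lemma lt_forms:
  assumes i: "1 \<le> i" "i < n"
  shows "phiS n i E = (if Pos i \<in> E \<and> Neg (i+1) \<in> E then 1 else 0)"
    "epsS n i E = (if Pos (i+1) \<in> E \<and> Neg i \<in> E then 1 else 0)"
    "phiL n i z = (if z = Pos i \<or> z = Neg (i+1) then 1 else 0)"
    "epsL n i z = (if z = Pos (i+1) \<or> z = Neg i then 1 else 0)"
    "fS n i E = (if Pos i \<in> E \<and> Neg (i+1) \<in> E then Some (E - {Pos i, Neg (i+1)} \<union> {Pos (i+1), Neg i}) else None)"
    "fL n i z = (if z = Pos i then Some (Pos (i+1)) else if z = Neg (i+1) then Some (Neg i) else None)"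
  using i by (auto simp: phiS_def epsS_def phiL_def epsL_def fS_def fL_def split: letter.splits)

lemma bar_eq[simp]: "(bar x = Pos j) = (x = Neg j)" "(bar x = Neg j) = (x = Pos j)" "(bar x = Zero) = (x = Zero)"
  "(Pos j = bar x) = (x = Neg j)" "(Neg j = bar x) = (x = Pos j)" "(Zero = bar x) = (x = Zero)"
  by (cases x; auto)+

lemma Dset_sub: "m \<in> Dset C x y \<Longrightarrow> m \<in> C \<or> m = x \<or> m = bar y"
  by (auto simp: Dset_def split: if_splits)

lemma Dset_keep: "m \<in> C \<Longrightarrow> m \<noteq> bar x \<Longrightarrow> m \<noteq> y \<Longrightarrow> m \<in> Dset C x y"
  by (auto simp: Dset_def)

lemma Dset_x: "x \<noteq> Zero \<Longrightarrow> (y = x \<Longrightarrow> x \<in> C) \<Longrightarrow> x \<in> Dset C x y"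
  by (auto simp: Dset_def)

lemma Dset_bary: "y \<noteq> x \<Longrightarrow> y \<noteq> Zero \<Longrightarrow> bar y \<in> Dset C x y"
  by (cases y) (auto simp: Dset_def)

lemma Dset_out: "m \<in> Dset C x y \<Longrightarrow> y \<noteq> x \<Longrightarrow> m \<noteq> y \<and> m \<noteq> bar x"
  by (cases x; cases y) (auto simp: Dset_def)

lemma core_lt:
  assumes sp: "is_spin n C" and v: "valid_letter n x" and ex: "\<exists>t\<in>C. rank n x \<le> rank n t"
  and i: "1 \<le> i" "i < n"
  shows "(fW n i [S C, L x] = None \<and> fW n i [L (xp n C x), S (Cp n C x)] = None) \<or>
         (\<exists>C1 x1 D'. fW n i [S C, L x] = Some [S C1, L x1] \<and>
             fW n i [L (xp n C x), S (Cp n C x)] = Some [L (xp n C1 x1), S D'])"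
proof -
  define y where "y = xp n C x"
  define D where "D = Cp n C x"
  have Dd: "D = Dset C x y"
    by (simp add: D_def Cp_def y_def)
  note F = xp_facts[OF sp v ex, folded y_def]
  have yC: "y \<in> C \<or> (y = Zero \<and> rank n x \<le> n)" and ry: "rank n x \<le> rank n y"
    and ymin: "\<forall>s\<in>C. rank n x \<le> rank n s \<longrightarrow> rank n y \<le> rank n s"
    and yZ: "rank n x \<le> n \<longrightarrow> rank n y \<le> n + 1" and xy: "x \<in> C \<longrightarrow> y = x"
    and vy: "valid_letter n y" using F by auto
  have PN: "\<And>j. 1 \<le> j \<Longrightarrow> j \<le> n \<Longrightarrow> (Neg j \<in> C) = (Pos j \<notin> C)" using spin_PN[OF sp] by blast
  have CZ: "Zero \<notin> C" using spin_Zero[OF sp] .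
  have Cv: "\<And>t. t \<in> C \<Longrightarrow> valid_letter n t" using spin_mem[OF sp] by blast
  note LF = lt_forms[OF i]
  have main: "(fW n i [S C, L x] = None \<and> fW n i [L y, S D] = None) \<or>
         (\<exists>C1 x1 D'. fW n i [S C, L x] = Some [S C1, L x1] \<and>
             fW n i [L y, S D] = Some [L (xp n C1 x1), S D'])"
  proof (cases "Pos i \<in> C \<and> Neg (i+1) \<in> C")
    case True
    define C1 where "C1 = C - {Pos i, Neg (i+1)} \<union> {Pos (i+1), Neg i}"
    have fC: "fS n i C = Some C1" using True LF by (simp add: C1_def)
    have sp1: "is_spin n C1" using fS_spin[OF sp fC] .
    have NPi: "Neg i \<notin> C" "Pos (i+1) \<notin> C" using PN[of i] PN[of "i+1"] True i by auto
    have yPi: "rank n y \<le> i \<or> rank n x > i" using ymin True by force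
    have yNi: "rank n y \<le> 2*n+1-i \<or> rank n x > 2*n+1-i" using ymin True i by force
    have yZ': "rank n y \<le> n + 1 \<or> rank n x > n" using yZ by auto
    show ?thesis
    proof (cases "x = Pos (i+1) \<or> x = Neg i")
      case True
      have L: "fW n i [S C, L x] = None"
        unfolding fW_SV using \<open>Pos i \<in> C \<and> Neg (i+1) \<in> C\<close> True i by (auto simp: LF)
      have xnC: "x \<notin> C" using True NPi by auto
      have yx: "y \<noteq> x" using yC xnC True by auto
      have phy: "phiL n i y = 0"
        using True ry yZ i vy unfolding LF by (cases y) auto
      have fSD: "\<not> (Pos i \<in> D \<and> Neg (i+1) \<in> D)"
        using Dset_out[of "Pos i" C x y] Dset_out[of "Neg (i+1)" C x y] yx True unfolding Dd by auto
      have R: "fW n i [L y, S D] = None"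
        unfolding fW_VS using phy fSD by (simp add: LF)
      show ?thesis using L R by simp
    next
      case False
      have L: "fW n i [S C, L x] = Some [S C1, L x]"
        unfolding fW_SV using \<open>Pos i \<in> C \<and> Neg (i+1) \<in> C\<close> False fC by (simp add: LF)
      define z where "z = (if y = Pos i then Pos (i+1) else if y = Neg (i+1) then Neg i else y)"
      have yC1: "y \<noteq> Pos i \<Longrightarrow> y \<noteq> Neg (i+1) \<Longrightarrow> y \<in> C \<Longrightarrow> y \<in> C1" by (simp add: C1_def)
      have zT: "z \<in> Tset n C1 x"
        unfolding Tset_mem z_def using yC ry False i yC1 v vy
        by (cases y; cases x) (auto simp: C1_def)
      have zmin: "\<forall>s\<in>Tset n C1 x. rank n z \<le> rank n s"
      proof
        fix s assume s: "s \<in> Tset n C1 x"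
        then have s2: "(s \<in> C1 \<and> rank n x \<le> rank n s) \<or> (s = Zero \<and> rank n x \<le> n)" by (simp add: Tset_mem)
        have sv: "valid_letter n s" using Tset_valid[OF sp1 s] .
        have ys: "s \<in> C \<longrightarrow> rank n y \<le> rank n s \<or> rank n x > rank n s" using ymin by force
        show "rank n z \<le> rank n s"
          using s2 sv ys yPi yNi yZ' ry v vy False i unfolding z_def C1_def
          by (cases s; cases x; cases y) auto
      qed
      have xpz: "xp n C1 x = z" using xp_eq[OF sp1 zT zmin] .
      have R: "\<exists>D'. fW n i [L y, S D] = Some [L z, S D']"
      proof (cases "y = Pos i \<or> y = Neg (i+1)")
        case True
        have "\<not> (Pos (i+1) \<in> D \<and> Neg i \<in> D)"
          using Dset_sub[of "Pos (i+1)" C x y] Dset_sub[of "Neg i" C x y] NPi False unfolding Dd by (cases y) auto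
        then have "epsS n i D = 0" using LF by simp
        moreover have "phiL n i y = 1" using True LF by simp
        ultimately show ?thesis unfolding fW_VS using True LF i by (auto simp: z_def)
      next
        case False
        have "Pos i \<in> D \<and> Neg (i+1) \<in> D" unfolding Dd
          using \<open>Pos i \<in> C \<and> Neg (i+1) \<in> C\<close> \<open>\<not> (x = Pos (i+1) \<or> x = Neg i)\<close> False
          by (auto intro!: Dset_keep)
        moreover have "phiL n i y = 0" using False LF by simp
        ultimately show ?thesis unfolding fW_VS using False LF by (auto simp: z_def)
      qed
      then obtain D' where "fW n i [L y, S D] = Some [L z, S D']" by blast
      then show ?thesis using L xpz by blast
    qed
  next
    case False
    have yPi: "Pos i \<in> C \<Longrightarrow> rank n y \<le> i \<or> rank n x > i" using ymin by force
    have yNi: "Neg (i+1) \<in> C \<Longrightarrow> rank n y \<le> 2*n+1-i \<or> rank n x > 2*n+1-i" using ymin i by force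
    have yP1: "Pos (i+1) \<in> C \<Longrightarrow> rank n y \<le> i+1 \<or> rank n x > i+1" using ymin by force
    have yN1: "Neg i \<in> C \<Longrightarrow> rank n y \<le> 2*n+2-i \<or> rank n x > 2*n+2-i" using ymin i by force
    have yZ': "rank n y \<le> n + 1 \<or> rank n x > n" using yZ by auto
    show ?thesis
    proof (cases "x = Pos i \<or> x = Neg (i+1)")
      case True
      define x1 where "x1 = (if x = Pos i then Pos (i+1) else Neg i)"
      have L: "fW n i [S C, L x] = Some [S C, L x1]"
        unfolding fW_SV using False True i by (auto simp: LF x1_def)
      have vx1: "valid_letter n x1" using True i by (auto simp: x1_def)
      have rx1: "rank n x1 = rank n x + 1" using True i by (auto simp: x1_def)
      show ?thesis
      proof (cases "x \<in> C")
        case True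
        then have yx: "y = x" using xy by simp
        have DC: "D = C" using yx by (simp add: Dd Dset_def)
        have x1C: "x1 \<in> C" using True False \<open>x = Pos i \<or> x = Neg (i+1)\<close> PN[of i] PN[of "i+1"] i
          by (auto simp: x1_def)
        have xp1: "xp n C x1 = x1" using xp_facts[OF sp vx1] x1C by blast
        have "phiL n i y = 1" using yx \<open>x = Pos i \<or> x = Neg (i+1)\<close> LF by auto
        moreover have "epsS n i D = 0" using DC True \<open>x = Pos i \<or> x = Neg (i+1)\<close> PN[of i] PN[of "i+1"] i LF
          by auto
        moreover have "fL n i y = Some x1" using yx \<open>x = Pos i \<or> x = Neg (i+1)\<close> LF by (auto simp: x1_def)
        ultimately have "fW n i [L y, S D] = Some [L x1, S D]" unfolding fW_VS by simp
        then have "fW n i [L y, S D] = Some [L (xp n C x1), S D]" using xp1 by simp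
        then show ?thesis using L by blast
      next
        case False
        have yx: "y \<noteq> x" using yC False \<open>x = Pos i \<or> x = Neg (i+1)\<close> by auto
        have ryx: "rank n x < rank n y" using ry yx rank_inj[OF v vy] by fastforce
        have yT: "y \<in> Tset n C x1"
          using yC ryx rx1 \<open>x = Pos i \<or> x = Neg (i+1)\<close> i unfolding Tset_mem by auto
        have ymin1: "\<forall>s\<in>Tset n C x1. rank n y \<le> rank n s"
        proof
          fix s assume "s \<in> Tset n C x1"
          then have "(s \<in> C \<and> rank n x1 \<le> rank n s) \<or> (s = Zero \<and> rank n x1 \<le> n)" by (simp add: Tset_mem)
          then show "rank n y \<le> rank n s" using ymin yZ rx1 by auto
        qed
        have xp1: "xp n C x1 = y" using xp_eq[OF sp yT ymin1] .
        have phy: "phiL n i y = 0"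
          using \<open>x = Pos i \<or> x = Neg (i+1)\<close> yx ry yZ i vy unfolding LF by (cases y) auto
        have "Pos i \<in> D \<and> Neg (i+1) \<in> D"
        proof (cases "x = Pos i")
          case True
          have a: "Pos i \<in> D" unfolding Dd using Dset_x[of x y C] True yx by simp
          have "Neg (i+1) \<in> D"
          proof (cases "y = Pos (i+1)")
            case True then show ?thesis unfolding Dd using Dset_bary[of y x C] yx by simp
          next
            case False
            have "Pos (i+1) \<notin> C"
            proof
              assume "Pos (i+1) \<in> C"
              then have "rank n y \<le> i+1" using yP1 \<open>x = Pos i\<close> by auto
              then show False using ryx \<open>x = Pos i\<close> False vy i by (cases y) auto
            qed
            then have "Neg (i+1) \<in> C" using PN[of "i+1"] i by auto
            moreover have "y \<noteq> Neg (i+1)" using phy LF by auto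
            ultimately show ?thesis unfolding Dd using True by (auto intro!: Dset_keep)
          qed
          then show ?thesis using a by simp
        next
          case False
          then have xN: "x = Neg (i+1)" using \<open>x = Pos i \<or> x = Neg (i+1)\<close> by simp
          have a: "Neg (i+1) \<in> D" unfolding Dd using Dset_x[of x y C] xN yx by simp
          have "Pos i \<in> D"
          proof (cases "y = Neg i")
            case True then show ?thesis unfolding Dd using Dset_bary[of y x C] yx by simp
          next
            case False
            have "Neg i \<notin> C"
            proof
              assume "Neg i \<in> C"
              then have "rank n y \<le> 2*n+2-i" using yN1 xN i by auto
              then show False using ryx xN False vy i by (cases y) auto
            qed
            then have "Pos i \<in> C" using PN[of i] i by auto
            moreover have "y \<noteq> Pos i" using phy LF by auto
            ultimately show ?thesis unfolding Dd using xN by (auto intro!: Dset_keep)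
          qed
          then show ?thesis using a by simp
        qed
        then obtain D' where "fS n i D = Some D'" using LF by auto
        then have "fW n i [L y, S D] = Some [L y, S D']" unfolding fW_VS using phy by simp
        then have "fW n i [L y, S D] = Some [L (xp n C x1), S D']" using xp1 by simp
        then show ?thesis using L by blast
      qed
    next
      case False
      have L: "fW n i [S C, L x] = None"
        unfolding fW_SV using \<open>\<not> (Pos i \<in> C \<and> Neg (i+1) \<in> C)\<close> False i by (auto simp: LF)
      have "phiL n i y \<le> epsS n i D \<and> fS n i D = None"
      proof (cases "x \<in> C")
        case True
        then have "y = x" using xy by simp
        then have "D = C" by (simp add: Dd Dset_def)
        then show ?thesis using \<open>y = x\<close> False \<open>\<not> (Pos i \<in> C \<and> Neg (i+1) \<in> C)\<close> LF by auto
      next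
        case xnC: False
        have yx: "y \<noteq> x" using yC xnC by auto
        show ?thesis
        proof (cases "y = Pos i \<or> y = Neg (i+1)")
          case True
          then have yinC: "y \<in> C" using yC by auto
          have "Pos (i+1) \<in> D \<and> Neg i \<in> D"
          proof (cases "y = Pos i")
            case True
            have "Neg (i+1) \<notin> C" using yinC True \<open>\<not> (Pos i \<in> C \<and> Neg (i+1) \<in> C)\<close> by auto
            then have "Pos (i+1) \<in> C" using PN[of "i+1"] i by auto
            then have "Pos (i+1) \<in> D" unfolding Dd using True False by (auto intro!: Dset_keep)
            moreover have "Neg i \<in> D" unfolding Dd using Dset_bary[of y x C] yx True by simp
            ultimately show ?thesis by simp
          next
            case False
            then have yN: "y = Neg (i+1)" using \<open>y = Pos i \<or> y = Neg (i+1)\<close> by simp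
            have "Pos i \<notin> C" using yinC yN \<open>\<not> (Pos i \<in> C \<and> Neg (i+1) \<in> C)\<close> by auto
            then have "Neg i \<in> C" using PN[of i] i by auto
            then have "Neg i \<in> D" unfolding Dd using yN \<open>\<not> (x = Pos i \<or> x = Neg (i+1))\<close> by (auto intro!: Dset_keep)
            moreover have "Pos (i+1) \<in> D" unfolding Dd using Dset_bary[of y x C] yx yN by simp
            ultimately show ?thesis by simp
          qed
          moreover have "y \<notin> D" unfolding Dd using Dset_out[of y C x y] yx by auto
          ultimately show ?thesis using True LF by auto
        next
          case False
          have "\<not> (Pos i \<in> D \<and> Neg (i+1) \<in> D)"
          proof
            assume a: "Pos i \<in> D \<and> Neg (i+1) \<in> D"
            have p: "Pos i \<in> C \<or> y = Neg i" using Dset_sub[of "Pos i" C x y] a \<open>\<not> (x = Pos i \<or> x = Neg (i+1))\<close>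
              unfolding Dd by auto
            have q: "Neg (i+1) \<in> C \<or> y = Pos (i+1)" using Dset_sub[of "Neg (i+1)" C x y] a \<open>\<not> (x = Pos i \<or> x = Neg (i+1))\<close>
              unfolding Dd by auto
            show False
              using p q \<open>\<not> (Pos i \<in> C \<and> Neg (i+1) \<in> C)\<close> yPi yNi ry yx v i
              by (cases x) auto
          qed
          then show ?thesis using False LF by auto
        qed
      qed
      then have R: "fW n i [L y, S D] = None" unfolding fW_VS by simp
      show ?thesis using L R by simp
    qed
  qed
  then show ?thesis unfolding y_def D_def .
qed

lemma n_forms:
  assumes n: "1 \<le> n"
  shows "phiS n n E = (if Pos n \<in> E then 1 else 0)"
    "epsS n n E = (if Neg n \<in> E then 1 else 0)"
    "phiL n n z = (if z = Pos n then 2 else if z = Zero then 1 else 0)"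
    "epsL n n z = (if z = Neg n then 2 else if z = Zero then 1 else 0)"
    "fS n n E = (if Pos n \<in> E then Some (E - {Pos n} \<union> {Neg n}) else None)"
    "fL n n z = (if z = Pos n then Some Zero else if z = Zero then Some (Neg n) else None)"
  using n by (auto simp: phiS_def epsS_def phiL_def epsL_def fS_def fL_def split: letter.splits)

lemma core_n:
  assumes sp: "is_spin n C" and v: "valid_letter n x" and ex: "\<exists>t\<in>C. rank n x \<le> rank n t"
  and n: "1 \<le> n"
  shows "(fW n n [S C, L x] = None \<and> fW n n [L (xp n C x), S (Cp n C x)] = None) \<or>
         (\<exists>C1 x1 D'. fW n n [S C, L x] = Some [S C1, L x1] \<and>
             fW n n [L (xp n C x), S (Cp n C x)] = Some [L (xp n C1 x1), S D'])"
proof -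
  define y where "y = xp n C x"
  define D where "D = Cp n C x"
  have Dd: "D = Dset C x y"
    by (simp add: D_def Cp_def y_def)
  note F = xp_facts[OF sp v ex, folded y_def]
  have yC: "y \<in> C \<or> (y = Zero \<and> rank n x \<le> n)" and ry: "rank n x \<le> rank n y"
    and ymin: "\<forall>s\<in>C. rank n x \<le> rank n s \<longrightarrow> rank n y \<le> rank n s"
    and yZ: "rank n x \<le> n \<longrightarrow> rank n y \<le> n + 1" and xy: "x \<in> C \<longrightarrow> y = x"
    and vy: "valid_letter n y" using F by auto
  have yZ': "rank n y \<le> n + 1 \<or> rank n x > n" using yZ by auto
  have PN: "(Neg n \<in> C) = (Pos n \<notin> C)" using spin_PN[OF sp, of n] n by blast
  have CZ: "Zero \<notin> C" using spin_Zero[OF sp] .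
  have Cv: "\<And>t. t \<in> C \<Longrightarrow> valid_letter n t" using spin_mem[OF sp] by blast
  note LF = n_forms[OF n]
  have main: "(fW n n [S C, L x] = None \<and> fW n n [L y, S D] = None) \<or>
         (\<exists>C1 x1 D'. fW n n [S C, L x] = Some [S C1, L x1] \<and>
             fW n n [L y, S D] = Some [L (xp n C1 x1), S D'])"
  proof (cases "Pos n \<in> C")
    case True
    have NN: "Neg n \<notin> C" using PN True by simp
    have yPn: "rank n y \<le> n \<or> rank n x > n" using ymin True by force
    show ?thesis
    proof (cases "x = Zero \<or> x = Neg n")
      case False
      define C1 where "C1 = C - {Pos n} \<union> {Neg n}"
      have fC: "fS n n C = Some C1" using True LF by (simp add: C1_def)
      have sp1: "is_spin n C1" using fS_spin[OF sp fC] .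
      have L: "fW n n [S C, L x] = Some [S C1, L x]"
        unfolding fW_SV using True False fC by (simp add: LF)
      define z where "z = (if y = Pos n then Zero else y)"
      have xn: "rank n x \<le> n \<or> rank n x > n + 2" using False v by (cases x) auto
      have zT: "z \<in> Tset n C1 x"
        unfolding Tset_mem z_def using yC ry yPn xn vy by (cases y) (auto simp: C1_def)
      have zmin: "\<forall>s\<in>Tset n C1 x. rank n z \<le> rank n s"
      proof
        fix s assume s: "s \<in> Tset n C1 x"
        then have s2: "(s \<in> C1 \<and> rank n x \<le> rank n s) \<or> (s = Zero \<and> rank n x \<le> n)" by (simp add: Tset_mem)
        have sv: "valid_letter n s" using Tset_valid[OF sp1 s] .
        have ys: "s \<in> C \<longrightarrow> rank n y \<le> rank n s \<or> rank n x > rank n s" using ymin by force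
        show "rank n z \<le> rank n s"
          using s2 sv ys yPn yZ' xn ry v vy unfolding z_def C1_def
          by (cases s; cases y) auto
      qed
      have xpz: "xp n C1 x = z" using xp_eq[OF sp1 zT zmin] .
      have R: "\<exists>D'. fW n n [L y, S D] = Some [L z, S D']"
      proof (cases "y = Pos n")
        case True
        have "epsS n n D \<le> 1" using LF by simp
        then show ?thesis unfolding fW_VS using True LF by (auto simp: z_def)
      next
        case False
        have yZ0: "y \<noteq> Zero" using yC yPn CZ by auto
        have "Pos n \<in> D" unfolding Dd using \<open>Pos n \<in> C\<close> False \<open>\<not> (x = Zero \<or> x = Neg n)\<close>
          by (auto intro!: Dset_keep)
        moreover have "phiL n n y = 0" using False yZ0 LF by simp
        ultimately show ?thesis unfolding fW_VS using False LF by (auto simp: z_def)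
      qed
      then obtain D' where "fW n n [L y, S D] = Some [L z, S D']" by blast
      then show ?thesis using L xpz by blast
    next
      case True
      show ?thesis
      proof (cases "x = Zero")
        case True
        have L: "fW n n [S C, L x] = Some [S C, L (Neg n)]"
          unfolding fW_SV using \<open>Pos n \<in> C\<close> True by (simp add: LF)
        have yinC: "y \<in> C" using yC True by auto
        have ry2: "rank n y \<ge> n + 2" using ry True yinC CZ Cv[OF yinC] by (cases y) auto
        have yT: "y \<in> Tset n C (Neg n)" using yinC ry2 n by (simp add: Tset_mem)
        have ymin1: "\<forall>s\<in>Tset n C (Neg n). rank n y \<le> rank n s"
        proof
          fix s assume "s \<in> Tset n C (Neg n)"
          then have "s \<in> C \<and> rank n (Neg n) \<le> rank n s" using n by (auto simp: Tset_mem)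
          then show "rank n y \<le> rank n s" using ymin True by auto
        qed
        have xp1: "xp n C (Neg n) = y" using xp_eq[OF sp yT ymin1] .
        have phy: "phiL n n y = 0" using ry2 LF by auto
        have "Pos n \<in> D" unfolding Dd using \<open>Pos n \<in> C\<close> True ry2 by (auto intro!: Dset_keep)
        then obtain D' where "fS n n D = Some D'" using LF by auto
        then have "fW n n [L y, S D] = Some [L y, S D']" unfolding fW_VS using phy by simp
        then have "fW n n [L y, S D] = Some [L (xp n C (Neg n)), S D']" using xp1 by simp
        then show ?thesis using L by blast
      next
        case False
        then have xN: "x = Neg n" using \<open>x = Zero \<or> x = Neg n\<close> by simp
        have L: "fW n n [S C, L x] = None"
          unfolding fW_SV using \<open>Pos n \<in> C\<close> xN by (simp add: LF)
        have yx: "y \<noteq> x" using yC xN NN n by auto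
        have phy: "phiL n n y = 0" using ry xN vy LF by (cases y) auto
        have "Pos n \<notin> D" unfolding Dd using Dset_out[of "Pos n" C x y] yx xN by auto
        then have R: "fW n n [L y, S D] = None" unfolding fW_VS using phy LF by simp
        show ?thesis using L R by simp
      qed
    qed
  next
    case False
    have NN: "Neg n \<in> C" using PN False by simp
    have hN: "xp n C Zero = Neg n"
    proof (rule xp_eq[OF sp])
      show "Neg n \<in> Tset n C Zero" using NN n by (simp add: Tset_mem)
      show "\<forall>s\<in>Tset n C Zero. rank n (Neg n) \<le> rank n s"
      proof
        fix s assume "s \<in> Tset n C Zero"
        then have "s \<in> C \<and> n + 1 \<le> rank n s" by (auto simp: Tset_mem)
        then show "rank n (Neg n) \<le> rank n s" using CZ Cv[of s] by (cases s) auto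
      qed
    qed
    show ?thesis
    proof (cases "x = Pos n")
      case True
      have L: "fW n n [S C, L x] = Some [S C, L Zero]"
        unfolding fW_SV using False True by (simp add: LF)
      have yZero: "y = Zero"
      proof (rule ccontr)
        assume "y \<noteq> Zero"
        then have "y \<in> C" using yC by auto
        then show False using ry yZ True False Cv[of y] CZ by (cases y) auto
      qed
      have yx: "y \<noteq> x" using yZero True by simp
      have "Neg n \<notin> D" unfolding Dd using Dset_out[of "Neg n" C x y] yx True by auto
      then have "fW n n [L y, S D] = Some [L (Neg n), S D]" unfolding fW_VS using yZero LF by simp
      then have "fW n n [L y, S D] = Some [L (xp n C Zero), S D]" using hN by simp
      then show ?thesis using L by blast
    next
      case xnP: False
      show ?thesis
      proof (cases "x = Zero")
        case True
        have L: "fW n n [S C, L x] = Some [S C, L (Neg n)]"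
          unfolding fW_SV using False True by (simp add: LF)
        have yN: "y = Neg n" using hN True by (simp add: y_def)
        have ex1: "\<exists>t\<in>C. rank n (Neg n) \<le> rank n t" using NN by blast
        have xp1: "xp n C (Neg n) = Neg n" using xp_facts[OF sp _ ex1] NN n by auto
        have "Pos n \<in> D" unfolding Dd using Dset_bary[of y x C] yN True by simp
        then obtain D' where "fS n n D = Some D'" using LF by auto
        then have "fW n n [L y, S D] = Some [L (Neg n), S D']" unfolding fW_VS using yN LF by simp
        then have "fW n n [L y, S D] = Some [L (xp n C (Neg n)), S D']" using xp1 by simp
        then show ?thesis using L by blast
      next
        case xnZ: False
        have L: "fW n n [S C, L x] = None"
          unfolding fW_SV using False xnP xnZ by (simp add: LF)
        have "phiL n n y \<le> epsS n n D \<and> fS n n D = None"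
        proof (cases "x \<in> C")
          case True
          then have "y = x" using xy by simp
          then have "D = C" by (simp add: Dd Dset_def)
          then show ?thesis using \<open>y = x\<close> False xnP xnZ LF by auto
        next
          case xnC: False
          have yx: "y \<noteq> x" using yC xnC by auto
          have yNN: "y \<noteq> Neg n"
          proof
            assume yN: "y = Neg n"
            show False
            proof (cases x)
              case (Pos j) then show False using yZ' yN v by auto
            next
              case Zero then show False using xnZ by simp
            next
              case (Neg j)
              then have "j = n" using ry yN v by auto
              then show False using Neg xnC NN by simp
            qed
          qed
          have "Pos n \<notin> D" using Dset_sub[of "Pos n" C x y] False xnP yNN unfolding Dd by auto
          moreover have "y = Zero \<Longrightarrow> Neg n \<in> D" unfolding Dd using NN xnP by (auto intro!: Dset_keep)
          moreover have "y \<noteq> Pos n" using yC False by auto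
          ultimately show ?thesis using LF by auto
        qed
        then have R: "fW n n [L y, S D] = None" unfolding fW_VS by simp
        show ?thesis using L R by simp
      qed
    qed
  qed
  then show ?thesis unfolding y_def D_def .
qed

lemma core:
  assumes sp: "is_spin n C" and v: "valid_letter n x" and ex: "\<exists>t\<in>C. rank n x \<le> rank n t"
  and i: "1 \<le> i" "i \<le> n"
  shows "(fW n i [S C, L x] = None \<and> fW n i [L (xp n C x), S (Cp n C x)] = None) \<or>
         (\<exists>C1 x1 D'. fW n i [S C, L x] = Some [S C1, L x1] \<and>
             fW n i [L (xp n C x), S (Cp n C x)] = Some [L (xp n C1 x1), S D'])"
proof (cases "i = n")
  case True then show ?thesis using core_n[OF sp v ex] i by simp
next
  case False then show ?thesis using core_lt[OF sp v ex] i by simp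
qed

lemma fcomm_B:
  assumes n: "n \<ge> 2" and w: "w \<in> Bset n" and i: "i \<in> {1..n}"
  shows "fW n i (PsiB n w) = map_option (PsiB n) (fW n i w)"
proof -
  obtain C x where wd: "w = [S C, L x]" "is_spin n C" "valid_letter n x" "\<not> tri n x C"
    using w by (auto simp: Bset_def)
  have ex: "\<exists>t\<in>C. rank n x \<le> rank n t" using Bset_ex[OF n wd(2,4)] .
  have i1: "1 \<le> i" "i \<le> n" using i by auto
  have Pw: "PsiB n w = [L (xp n C x), S (Cp n C x)]" using wd(1) by simp
  note PP = PsiB_props[OF n w]
  from core[OF wd(2,3) ex i1] show ?thesis
  proof
    assume "fW n i [S C, L x] = None \<and> fW n i [L (xp n C x), S (Cp n C x)] = None"
    then show ?thesis using wd(1) Pw by simp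
  next
    assume "\<exists>C1 x1 D'. fW n i [S C, L x] = Some [S C1, L x1] \<and>
             fW n i [L (xp n C x), S (Cp n C x)] = Some [L (xp n C1 x1), S D']"
    then obtain C1 x1 D' where f1: "fW n i w = Some [S C1, L x1]"
      and f2: "fW n i (PsiB n w) = Some [L (xp n C1 x1), S D']" using wd(1) Pw by auto
    have w1: "[S C1, L x1] \<in> Bset n" using B_f[OF n w i f1] .
    then obtain ex1: "\<exists>t\<in>C1. rank n x1 \<le> rank n t" and sp1: "is_spin n C1" and v1: "valid_letter n x1"
      using Bset_ex[OF n] by (auto simp: Bset_def)
    note P1 = PsiB_props[OF n w1]
    have gw: "goodW n w" using wd by (simp add: goodW2)
    have g2: "goodW n (PsiB n w)" using PP by simp
    note A1 = fW_props[OF gw f1 i1]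
    note A2 = fW_props[OF g2 f2 i1]
    have spD: "is_spin n D'" using A2 by (simp add: goodW2')
    have spC: "is_spin n (Cp n C1 x1)" using Cp_props[OF sp1 v1 ex1] by simp
    have "wtS D' = wtS (Cp n C1 x1)"
    proof
      fix j
      have "wtW [L (xp n C1 x1), S D'] j = wtW (PsiB n w) j - alpha n i j" using A2 by simp
      also have "\<dots> = wtW w j - alpha n i j" using PP by simp
      also have "\<dots> = wtW [S C1, L x1] j" using A1 by simp
      also have "\<dots> = wtW (PsiB n [S C1, L x1]) j" using P1 by simp
      finally show "wtS D' j = wtS (Cp n C1 x1) j" by simp
    qed
    then have "D' = Cp n C1 x1" using spin_wt_eq[OF spD spC] by simp
    then show ?thesis using f1 f2 by simp
  qed
qed

lemma PsiB_hw1: "n \<ge> 2 \<Longrightarrow> PsiB n [S (Cn n), L (Pos 1)] = [L (Pos 1), S (Cn n)]"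
proof -
  assume n: "n \<ge> 2"
  have P1: "Pos 1 \<in> Cn n" using n by (simp add: Cn_mem)
  have ex: "\<exists>t\<in>Cn n. rank n (Pos 1) \<le> rank n t" using P1 by blast
  have "xp n (Cn n) (Pos 1) = Pos 1" using xp_facts[OF Cn_spin _ ex] P1 n by auto
  then show ?thesis by (simp add: Cp_def Dset_def)
qed

lemma iso_B:
  assumes n: "n \<ge> 2"
  shows "crystal_iso n (component n [S (Cn n), L (Pos 1)]) (component n [L (Pos 1), S (Cn n)]) (PsiB n)"
proof -
  have X: "component n [S (Cn n), L (Pos 1)] = component n [S (Cn n), L (Pos 1)]" "goodW n [S (Cn n), L (Pos 1)]"
    using Cn_spin n by (auto simp: goodW2)
  note cB = comp_B[OF n]
  have wt: "\<forall>w\<in>component n [S (Cn n), L (Pos 1)]. wtW (PsiB n w) = wtW w \<and> goodW n (PsiB n w)"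
    using PsiB_props[OF n] cB by blast
  have fc: "\<forall>w\<in>component n [S (Cn n), L (Pos 1)]. \<forall>i\<in>{1..n}. fW n i (PsiB n w) = map_option (PsiB n) (fW n i w)"
    using fcomm_B[OF n] cB by blast
  have u: "\<forall>w\<in>component n [S (Cn n), L (Pos 1)]. (\<forall>i\<in>{1..n}. eW n i w = None) \<longrightarrow> w = [S (Cn n), L (Pos 1)]"
    using uhw_B[OF n] cB by blast
  from iso_from_f[OF X wt fc hw1_hw[OF n] u] show ?thesis using PsiB_hw1[OF n] by simp
qed

lemma part6:
  assumes n: "n \<ge> 2"
  and I: "crystal_iso n (component n [S (Cn n), L (Pos 1)]) (component n [L (Pos 1), S (Cn n)]) \<Psi>'"
  and c: "is_spin n C \<and> valid_letter n x \<and> \<not> tri n x C"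
  shows "let T = (if rank n Zero \<le> rank n x then {t \<in> C. rank n x \<le> rank n t}
                  else {t \<in> C. rank n x \<le> rank n t} \<union> {Zero})
         in \<exists>x' C'. x' \<in> T \<and> (\<forall>t\<in>T. rank n x' \<le> rank n t) \<and>
              is_spin n C' \<and> (\<forall>j. wtS C' j = wtS C j + wtL x j - wtL x' j) \<and>
              \<Psi>' [S C, L x] = [L x', S C']"
proof -
  have w: "[S C, L x] \<in> component n [S (Cn n), L (Pos 1)]" using c comp_B[OF n] by (auto simp: Bset_def)
  have hw: "\<forall>i\<in>{1..n}. eW n i [S (Cn n), L (Pos 1)] = None" using hw1_hw[OF n] .
  have u: "\<forall>w\<in>component n [S (Cn n), L (Pos 1)]. (\<forall>i\<in>{1..n}. eW n i w = None) \<longrightarrow> w = [S (Cn n), L (Pos 1)]"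
    using uhw_B[OF n] comp_B[OF n] by blast
  have eq: "\<forall>w\<in>component n [S (Cn n), L (Pos 1)]. PsiB n w = \<Psi>' w"
    using iso_unique[OF iso_B[OF n] I refl hw u] .
  have ex: "\<exists>t\<in>C. rank n x \<le> rank n t" using Bset_ex[OF n] c by blast
  have "PsiB n [S C, L x] = \<Psi>' [S C, L x]" using eq w by blast
  then have Ps: "\<Psi>' [S C, L x] = [L (xp n C x), S (Cp n C x)]" by simp
  note S = xp_spec[OF _ ex] 
  note CP = Cp_props[OF _ _ ex]
  have T: "Tset n C x = (if rank n Zero \<le> rank n x then {t \<in> C. rank n x \<le> rank n t}
                  else {t \<in> C. rank n x \<le> rank n t} \<union> {Zero})" by (simp add: Tset_def)
  show ?thesis unfolding Let_def T[symmetric]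
    using S CP c Ps by blast
qed

theorem mainTheorem16:
  fixes n :: nat
  assumes "n \<ge> 2"
  shows
    "component n [S (Cn n), L Zero] =
       {[S C, L x] | C x. is_spin n C \<and> valid_letter n x \<and> tri n x C}
   \<and>
     component n [S (Cn n), L (Pos 1)] =
       {[S C, L x] | C x. is_spin n C \<and> valid_letter n x \<and> \<not> tri n x C}
   \<and>
     (\<exists>\<Psi>. crystal_iso n (component n [S (Cn n), L Zero]) (component n [S (Cn n)]) \<Psi>)
   \<and>
     (\<forall>\<Psi>. crystal_iso n (component n [S (Cn n), L Zero]) (component n [S (Cn n)]) \<Psi> \<longrightarrow>
        (\<forall>C x. is_spin n C \<and> valid_letter n x \<and> tri n x C \<longrightarrow>
           (\<exists>C'. is_spin n C' \<and> (\<forall>j. wtS C' j = wtS C j + wtL x j) \<and>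
                 \<Psi> [S C, L x] = [S C'])))
   \<and>
     (\<exists>\<Psi>'. crystal_iso n (component n [S (Cn n), L (Pos 1)])
                          (component n [L (Pos 1), S (Cn n)]) \<Psi>')
   \<and>
     (\<forall>\<Psi>'. crystal_iso n (component n [S (Cn n), L (Pos 1)])
                          (component n [L (Pos 1), S (Cn n)]) \<Psi>' \<longrightarrow>
        (\<forall>C x. is_spin n C \<and> valid_letter n x \<and> \<not> tri n x C \<longrightarrow>
           (let T = (if rank n Zero \<le> rank n x then {t \<in> C. rank n x \<le> rank n t}
                     else {t \<in> C. rank n x \<le> rank n t} \<union> {Zero})
            in \<exists>x' C'. x' \<in> T \<and> (\<forall>t\<in>T. rank n x' \<le> rank n t) \<and>
                 is_spin n C' \<and> (\<forall>j. wtS C' j = wtS C j + wtL x j - wtL x' j) \<and>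
                 \<Psi>' [S C, L x] = [L x', S C'])))"
proof -
  have n: "n \<ge> 2" by fact
  show ?thesis
  proof (intro conjI)
    show "component n [S (Cn n), L Zero] =
       {[S C, L x] | C x. is_spin n C \<and> valid_letter n x \<and> tri n x C}"
      using comp_A[OF n] by (simp add: Aset_def)
    show "component n [S (Cn n), L (Pos 1)] =
       {[S C, L x] | C x. is_spin n C \<and> valid_letter n x \<and> \<not> tri n x C}"
      using comp_B[OF n] by (simp add: Bset_def)
    show "\<exists>\<Psi>. crystal_iso n (component n [S (Cn n), L Zero]) (component n [S (Cn n)]) \<Psi>"
      using iso_A[OF n] by blast
    show "\<forall>\<Psi>. crystal_iso n (component n [S (Cn n), L Zero]) (component n [S (Cn n)]) \<Psi> \<longrightarrow>
        (\<forall>C x. is_spin n C \<and> valid_letter n x \<and> tri n x C \<longrightarrow>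
           (\<exists>C'. is_spin n C' \<and> (\<forall>j. wtS C' j = wtS C j + wtL x j) \<and>
                 \<Psi> [S C, L x] = [S C']))"
      using part4[OF n] by blast
    show "\<exists>\<Psi>'. crystal_iso n (component n [S (Cn n), L (Pos 1)])
                          (component n [L (Pos 1), S (Cn n)]) \<Psi>'"
      using iso_B[OF n] by blast
    show "\<forall>\<Psi>'. crystal_iso n (component n [S (Cn n), L (Pos 1)])
                          (component n [L (Pos 1), S (Cn n)]) \<Psi>' \<longrightarrow>
        (\<forall>C x. is_spin n C \<and> valid_letter n x \<and> \<not> tri n x C \<longrightarrow>
           (let T = (if rank n Zero \<le> rank n x then {t \<in> C. rank n x \<le> rank n t}
                     else {t \<in> C. rank n x \<le> rank n t} \<union> {Zero})
            in \<exists>x' C'. x' \<in> T \<and> (\<forall>t\<in>T. rank n x' \<le> rank n t) \<and>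
                 is_spin n C' \<and> (\<forall>j. wtS C' j = wtS C j + wtL x j - wtL x' j) \<and>
                 \<Psi>' [S C, L x] = [L x', S C']))"
      using part6[OF n] by blast
  qed
qed

end
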